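(* Let $\mathcal{M}$ be a category with finite products, regarded as a symmetric monoidal category $(\mathcal{M},\times,1)$ via a choice of binary products and a terminal object $1$. Then there is an isomorphism of categories \[ \mathbf{SColax}\big((\Phi,+,0),(\mathcal{M},\times,1)\big)\;\cong\;[\Gamma^{\mathrm{op}},\mathcal{M}]. \]
   Context: $\Phi$ is the skeletal category of finite sets: its objects are the sets $n=\{0,\dots,n-1\}$ for $n\ge 0$ and its morphisms are all functions; it is a symmetric monoidal category under disjoint union $+$ (with $m+n$ identified with $\{0,\dots,m+n-1\}$ in the evident order-preserving way on each summand) and unit $0=\emptyset$. $\Gamma^{\mathrm{op}}$ is the skeletal category of finite based sets: objects $[n]=\{0,1,\dots,n\}$ for $n\ge 0$, morphisms $[m]\to[n]$ the functions $g$ with $g(0)=0$. $[\Gamma^{\mathrm{op}},\mathcal{M}]$ is the category of functors $\Gamma^{\mathrm{op}}\to\mathcal{M}$ and natural transformations. A colax symmetric monoidal functor $(X,\xi):(\mathcal{L},\otimes,I)\to(\mathcal{M},\otimes,I)$ between symmetric monoidal categories is a functor $X$ together with morphisms $\xi_{A,B}:X(A\otimes B)\to X(A)\otimes X(B)$, natural in $A,B$, and $\xi_0:X(I)\to I$ (not required to be invertible), satisfying the usual coassociativity and counit axioms of a monoidal functor (with these maps in place of isomorphisms) and compatibility with the symmetries. A monoidal transformation $\sigma:(W,\omega)\to(X,\xi)$ is a natural transformation $\sigma:W\to X$ with $\xi_{A,B}\circ\sigma_{A\otimes B}=(\sigma_A\otimes\sigma_B)\circ\omega_{A,B}$ and $\xi_0\circ\sigma_I=\omega_0$.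 $\mathbf{SColax}(\mathcal{L},\mathcal{M})$ denotes the category of colax symmetric monoidal functors and monoidal transformations. *)

theory Defs
  imports "HOL-Library.FuncSet"
begin

record ('o,'m) cat =
  Obj  :: "'o set"
  Arr  :: "'m set"
  Dom  :: "'m \<Rightarrow> 'o"
  Cod  :: "'m \<Rightarrow> 'o"
  Ide  :: "'o \<Rightarrow> 'm"
  Comp :: "'m \<Rightarrow> 'm \<Rightarrow> 'm"   (* Comp C g f = g \<circ> f *)

definition hom :: "('o,'m) cat \<Rightarrow> 'o \<Rightarrow> 'o \<Rightarrow> 'm set" where
  "hom C a b = {f \<in> Arr C. Dom C f = a \<and> Cod C f = b}"

definition category :: "('o,'m) cat \<Rightarrow> bool" where
  "category C \<longleftrightarrow>
    (\<forall>f\<in>Arr C. Dom C f \<in> Obj C \<and> Cod C f \<in> Obj C) \<and>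
    (\<forall>a\<in>Obj C. Ide C a \<in> hom C a a) \<and>
    (\<forall>f\<in>Arr C. \<forall>g\<in>Arr C. Cod C f = Dom C g \<longrightarrow> Comp C g f \<in> hom C (Dom C f) (Cod C g)) \<and>
    (\<forall>f\<in>Arr C. Comp C (Ide C (Cod C f)) f = f \<and> Comp C f (Ide C (Dom C f)) = f) \<and>
    (\<forall>f\<in>Arr C. \<forall>g\<in>Arr C. \<forall>h\<in>Arr C. Cod C f = Dom C g \<and> Cod C g = Dom C h \<longrightarrow>
        Comp C h (Comp C g f) = Comp C (Comp C h g) f)"

definition is_functor :: "('a,'c) cat \<Rightarrow> ('b,'d) cat \<Rightarrow> ('a \<Rightarrow> 'b) \<times> ('c \<Rightarrow> 'd) \<Rightarrow> bool" where
  "is_functor C D F \<longleftrightarrow>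
    (\<forall>a\<in>Obj C. fst F a \<in> Obj D) \<and>
    (\<forall>f\<in>Arr C. snd F f \<in> hom D (fst F (Dom C f)) (fst F (Cod C f))) \<and>
    (\<forall>a\<in>Obj C. snd F (Ide C a) = Ide D (fst F a)) \<and>
    (\<forall>f\<in>Arr C. \<forall>g\<in>Arr C. Cod C f = Dom C g \<longrightarrow>
        snd F (Comp C g f) = Comp D (snd F g) (snd F f))"

text \<open>Extensionality (values outside the source category are fixed), so that functors
  are represented uniquely.\<close>

definition ext_functor :: "('a,'c) cat \<Rightarrow> ('a \<Rightarrow> 'b) \<times> ('c \<Rightarrow> 'd) \<Rightarrow> bool" where
  "ext_functor C F \<longleftrightarrow>
    (\<forall>a. a \<notin> Obj C \<longrightarrow> fst F a = undefined) \<and> (\<forall>f. f \<notin> Arr C \<longrightarrow> snd F f = undefined)"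

definition nat_trans ::
  "('a,'c) cat \<Rightarrow> ('b,'d) cat \<Rightarrow> ('a \<Rightarrow> 'b) \<times> ('c \<Rightarrow> 'd) \<Rightarrow> ('a \<Rightarrow> 'b) \<times> ('c \<Rightarrow> 'd)
     \<Rightarrow> ('a \<Rightarrow> 'd) \<Rightarrow> bool" where
  "nat_trans C D F G \<sigma> \<longleftrightarrow>
    (\<forall>a\<in>Obj C. \<sigma> a \<in> hom D (fst F a) (fst G a)) \<and>
    (\<forall>f\<in>Arr C. Comp D (snd G f) (\<sigma> (Dom C f)) = Comp D (\<sigma> (Cod C f)) (snd F f)) \<and>
    (\<forall>a. a \<notin> Obj C \<longrightarrow> \<sigma> a = undefined)"

definition funcat :: "('a,'c) cat \<Rightarrow> ('b,'d) cat \<Rightarrow>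
   (('a \<Rightarrow> 'b) \<times> ('c \<Rightarrow> 'd),
    (('a \<Rightarrow> 'b) \<times> ('c \<Rightarrow> 'd)) \<times> (('a \<Rightarrow> 'b) \<times> ('c \<Rightarrow> 'd)) \<times> ('a \<Rightarrow> 'd)) cat" where
  "funcat C D =
    \<lparr> Obj = {F. is_functor C D F \<and> ext_functor C F},
      Arr = {(F, G, \<sigma>). is_functor C D F \<and> ext_functor C F \<and> is_functor C D G \<and> ext_functor C G
                        \<and> nat_trans C D F G \<sigma>},
      Dom = (\<lambda>(F, G, \<sigma>). F),
      Cod = (\<lambda>(F, G, \<sigma>). G),
      Ide = (\<lambda>F. (F, F, \<lambda>a. if a \<in> Obj C then Ide D (fst F a) else undefined)),
      Comp = (\<lambda>(G', H, \<tau>) (F, G, \<sigma>). (F, H, \<lambda>a. if a \<in> Obj C then Comp D (\<tau> a) (\<sigma> a) else undefined)) \<rparr>"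

definition iso_cat :: "('a,'c) cat \<Rightarrow> ('b,'d) cat \<Rightarrow> bool" where
  "iso_cat C D \<longleftrightarrow> (\<exists>F G. is_functor C D F \<and> is_functor D C G \<and>
     (\<forall>a\<in>Obj C. fst G (fst F a) = a) \<and> (\<forall>f\<in>Arr C. snd G (snd F f) = f) \<and>
     (\<forall>b\<in>Obj D. fst F (fst G b) = b) \<and> (\<forall>g\<in>Arr D. snd F (snd G g) = g))"

text \<open>An arrow (n, m, f) of \<Phi> is a function {0..<n} \<rightarrow> {0..<m}, stored extensionally.\<close>

type_synonym farr = "nat \<times> nat \<times> (nat \<Rightarrow> nat)"

definition Phi :: "(nat, farr) cat" where
  "Phi = \<lparr> Obj = UNIV,
           Arr = {(n, m, f). f \<in> {..<n} \<rightarrow>\<^sub>E {..<m}},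
           Dom = (\<lambda>(n, m, f). n),
           Cod = (\<lambda>(n, m, f). m),
           Ide = (\<lambda>n. (n, n, restrict id {..<n})),
           Comp = (\<lambda>(m', k, g) (n, m, f). (n, k, restrict (g \<circ> f) {..<n})) \<rparr>"

text \<open>An arrow (m, n, g) of \<Gamma>^op is a based map [m] = {0..m} \<rightarrow> [n] = {0..n} with g 0 = 0.\<close>

definition Gamma_op :: "(nat, farr) cat" where
  "Gamma_op = \<lparr> Obj = UNIV,
           Arr = {(m, n, g). g \<in> {..m} \<rightarrow>\<^sub>E {..n} \<and> g 0 = 0},
           Dom = (\<lambda>(m, n, g). m),
           Cod = (\<lambda>(m, n, g). n),
           Ide = (\<lambda>n. (n, n, restrict id {..n})),
           Comp = (\<lambda>(m', k, g) (n, m, f). (n, k, restrict (g \<circ> f) {..n})) \<rparr>"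

text \<open>Monoidal structure of \<Phi> (disjoint union, strictly associative and unital on objects).\<close>

definition phi_plus :: "farr \<Rightarrow> farr \<Rightarrow> farr" where
  "phi_plus = (\<lambda>(a, a', f) (b, b', g).
     (a + b, a' + b', \<lambda>i\<in>{..<a + b}. if i < a then f i else a' + g (i - a)))"

definition phi_swap :: "nat \<Rightarrow> nat \<Rightarrow> farr" where
  "phi_swap a b = (a + b, b + a, \<lambda>i\<in>{..<a + b}. if i < a then b + i else i - a)"

definition has_chosen_products ::
  "('o,'m) cat \<Rightarrow> 'o \<Rightarrow> ('o \<Rightarrow> 'o \<Rightarrow> 'o) \<Rightarrow> ('o \<Rightarrow> 'o \<Rightarrow> 'm) \<Rightarrow> ('o \<Rightarrow> 'o \<Rightarrow> 'm) \<Rightarrow> bool" where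
  "has_chosen_products M one P p1 p2 \<longleftrightarrow>
    one \<in> Obj M \<and> (\<forall>a\<in>Obj M. \<exists>!t. t \<in> hom M a one) \<and>
    (\<forall>a\<in>Obj M. \<forall>b\<in>Obj M. P a b \<in> Obj M \<and> p1 a b \<in> hom M (P a b) a \<and> p2 a b \<in> hom M (P a b) b \<and>
       (\<forall>c\<in>Obj M. \<forall>f\<in>hom M c a. \<forall>g\<in>hom M c b.
          \<exists>!h. h \<in> hom M c (P a b) \<and> Comp M (p1 a b) h = f \<and> Comp M (p2 a b) h = g))"

definition mpair ::
  "('o,'m) cat \<Rightarrow> ('o \<Rightarrow> 'o \<Rightarrow> 'o) \<Rightarrow> ('o \<Rightarrow> 'o \<Rightarrow> 'm) \<Rightarrow> ('o \<Rightarrow> 'o \<Rightarrow> 'm)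
     \<Rightarrow> 'o \<Rightarrow> 'o \<Rightarrow> 'o \<Rightarrow> 'm \<Rightarrow> 'm \<Rightarrow> 'm" where
  "mpair M P p1 p2 c a b f g =
     (THE h. h \<in> hom M c (P a b) \<and> Comp M (p1 a b) h = f \<and> Comp M (p2 a b) h = g)"

definition mtens ::
  "('o,'m) cat \<Rightarrow> ('o \<Rightarrow> 'o \<Rightarrow> 'o) \<Rightarrow> ('o \<Rightarrow> 'o \<Rightarrow> 'm) \<Rightarrow> ('o \<Rightarrow> 'o \<Rightarrow> 'm) \<Rightarrow> 'm \<Rightarrow> 'm \<Rightarrow> 'm" where
  "mtens M P p1 p2 f g =
     mpair M P p1 p2 (P (Dom M f) (Dom M g)) (Cod M f) (Cod M g)
       (Comp M f (p1 (Dom M f) (Dom M g))) (Comp M g (p2 (Dom M f) (Dom M g)))"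

definition massoc ::
  "('o,'m) cat \<Rightarrow> ('o \<Rightarrow> 'o \<Rightarrow> 'o) \<Rightarrow> ('o \<Rightarrow> 'o \<Rightarrow> 'm) \<Rightarrow> ('o \<Rightarrow> 'o \<Rightarrow> 'm) \<Rightarrow> 'o \<Rightarrow> 'o \<Rightarrow> 'o \<Rightarrow> 'm" where
  "massoc M P p1 p2 a b c =
     mpair M P p1 p2 (P (P a b) c) a (P b c)
       (Comp M (p1 a b) (p1 (P a b) c))
       (mpair M P p1 p2 (P (P a b) c) b c (Comp M (p2 a b) (p1 (P a b) c)) (p2 (P a b) c))"

definition msym ::
  "('o,'m) cat \<Rightarrow> ('o \<Rightarrow> 'o \<Rightarrow> 'o) \<Rightarrow> ('o \<Rightarrow> 'o \<Rightarrow> 'm) \<Rightarrow> ('o \<Rightarrow> 'o \<Rightarrow> 'm) \<Rightarrow> 'o \<Rightarrow> 'o \<Rightarrow> 'm" where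
  "msym M P p1 p2 a b = mpair M P p1 p2 (P a b) b a (p2 a b) (p1 a b)"

type_synonym ('o,'m) colax = "((nat \<Rightarrow> 'o) \<times> (farr \<Rightarrow> 'm)) \<times> (nat \<Rightarrow> nat \<Rightarrow> 'm) \<times> 'm"

definition scolax_obj ::
  "('o,'m) cat \<Rightarrow> 'o \<Rightarrow> ('o \<Rightarrow> 'o \<Rightarrow> 'o) \<Rightarrow> ('o \<Rightarrow> 'o \<Rightarrow> 'm) \<Rightarrow> ('o \<Rightarrow> 'o \<Rightarrow> 'm)
     \<Rightarrow> ('o,'m) colax \<Rightarrow> bool" where
  "scolax_obj M one P p1 p2 W \<longleftrightarrow>
    (case W of (X, \<xi>, \<xi>0) \<Rightarrow>
      is_functor Phi M X \<and> ext_functor Phi X \<and>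
      (\<forall>A B. \<xi> A B \<in> hom M (fst X (A + B)) (P (fst X A) (fst X B))) \<and>
      \<xi>0 \<in> hom M (fst X 0) one \<and>
      \<comment> \<open>naturality of \<xi>\<close>
      (\<forall>f\<in>Arr Phi. \<forall>g\<in>Arr Phi.
         Comp M (\<xi> (Cod Phi f) (Cod Phi g)) (snd X (phi_plus f g)) =
         Comp M (mtens M P p1 p2 (snd X f) (snd X g)) (\<xi> (Dom Phi f) (Dom Phi g))) \<and>
      \<comment> \<open>coassociativity\<close>
      (\<forall>A B C.
         Comp M (massoc M P p1 p2 (fst X A) (fst X B) (fst X C))
           (Comp M (mtens M P p1 p2 (\<xi> A B) (Ide M (fst X C))) (\<xi> (A + B) C)) =
         Comp M (mtens M P p1 p2 (Ide M (fst X A)) (\<xi> B C)) (\<xi> A (B + C))) \<and>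
      \<comment> \<open>counit (left and right)\<close>
      (\<forall>A. Comp M (p2 one (fst X A)) (Comp M (mtens M P p1 p2 \<xi>0 (Ide M (fst X A))) (\<xi> 0 A))
             = Ide M (fst X A) \<and>
           Comp M (p1 (fst X A) one) (Comp M (mtens M P p1 p2 (Ide M (fst X A)) \<xi>0) (\<xi> A 0))
             = Ide M (fst X A)) \<and>
      \<comment> \<open>compatibility with symmetries\<close>
      (\<forall>A B. Comp M (msym M P p1 p2 (fst X A) (fst X B)) (\<xi> A B) =
             Comp M (\<xi> B A) (snd X (phi_swap A B))))"

definition monoidal_trans ::
  "('o,'m) cat \<Rightarrow> ('o \<Rightarrow> 'o \<Rightarrow> 'o) \<Rightarrow> ('o \<Rightarrow> 'o \<Rightarrow> 'm) \<Rightarrow> ('o \<Rightarrow> 'o \<Rightarrow> 'm)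
     \<Rightarrow> ('o,'m) colax \<Rightarrow> ('o,'m) colax \<Rightarrow> (nat \<Rightarrow> 'm) \<Rightarrow> bool" where
  "monoidal_trans M P p1 p2 V Y \<sigma> \<longleftrightarrow>
    (case V of (W, \<omega>, \<omega>0) \<Rightarrow> case Y of (X, \<xi>, \<xi>0) \<Rightarrow>
      nat_trans Phi M W X \<sigma> \<and>
      (\<forall>A B. Comp M (\<xi> A B) (\<sigma> (A + B)) = Comp M (mtens M P p1 p2 (\<sigma> A) (\<sigma> B)) (\<omega> A B)) \<and>
      Comp M \<xi>0 (\<sigma> 0) = \<omega>0)"

definition scolax_cat ::
  "('o,'m) cat \<Rightarrow> 'o \<Rightarrow> ('o \<Rightarrow> 'o \<Rightarrow> 'o) \<Rightarrow> ('o \<Rightarrow> 'o \<Rightarrow> 'm) \<Rightarrow> ('o \<Rightarrow> 'o \<Rightarrow> 'm)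
     \<Rightarrow> (('o,'m) colax, ('o,'m) colax \<times> ('o,'m) colax \<times> (nat \<Rightarrow> 'm)) cat" where
  "scolax_cat M one P p1 p2 =
    \<lparr> Obj = {W. scolax_obj M one P p1 p2 W},
      Arr = {(W, X, \<sigma>). scolax_obj M one P p1 p2 W \<and> scolax_obj M one P p1 p2 X \<and>
                         monoidal_trans M P p1 p2 W X \<sigma>},
      Dom = (\<lambda>(W, X, \<sigma>). W),
      Cod = (\<lambda>(W, X, \<sigma>). X),
      Ide = (\<lambda>W. (W, W, \<lambda>n. Ide M (fst (fst W) n))),
      Comp = (\<lambda>(X', Y, \<tau>) (W, X, \<sigma>). (W, Y, \<lambda>n. Comp M (\<tau> n) (\<sigma> n))) \<rparr>"

end

theory Submission
  imports Defs
begin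

lemma hom_iff: "f \<in> hom C a b \<longleftrightarrow> f \<in> Arr C \<and> Dom C f = a \<and> Cod C f = b"
  by (simp add: hom_def)

locale cprod =
  fixes M :: "('o,'m) cat" and one :: 'o and P :: "'o \<Rightarrow> 'o \<Rightarrow> 'o"
    and p1 p2 :: "'o \<Rightarrow> 'o \<Rightarrow> 'm"
  assumes cat: "category M" and prods: "has_chosen_products M one P p1 p2"
begin

lemma hom_obj: "f \<in> hom M a b \<Longrightarrow> a \<in> Obj M \<and> b \<in> Obj M"
  using cat unfolding category_def hom_def by auto

lemma ide_hom: "a \<in> Obj M \<Longrightarrow> Ide M a \<in> hom M a a"
  using cat unfolding category_def by auto

lemma comp_hom: "f \<in> hom M a b \<Longrightarrow> g \<in> hom M b c \<Longrightarrow> Comp M g f \<in> hom M a c"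
  using cat unfolding category_def hom_def by auto

lemma assoc: "f \<in> hom M a b \<Longrightarrow> g \<in> hom M b c \<Longrightarrow> h \<in> hom M c d \<Longrightarrow>
   Comp M h (Comp M g f) = Comp M (Comp M h g) f"
  using cat unfolding category_def hom_def by auto

lemma idl: "f \<in> hom M a b \<Longrightarrow> Comp M (Ide M b) f = f"
  using cat unfolding category_def hom_def by auto

lemma idr: "f \<in> hom M a b \<Longrightarrow> Comp M f (Ide M a) = f"
  using cat unfolding category_def hom_def by auto

lemma one_obj: "one \<in> Obj M"
  using prods unfolding has_chosen_products_def by auto

lemma term_unique: "t \<in> hom M a one \<Longrightarrow> t' \<in> hom M a one \<Longrightarrow> t = t'"
  using prods hom_obj unfolding has_chosen_products_def by metis

lemma term_ex: "a \<in> Obj M \<Longrightarrow> \<exists>t. t \<in> hom M a one"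
  using prods unfolding has_chosen_products_def by metis

lemma P_obj: "a \<in> Obj M \<Longrightarrow> b \<in> Obj M \<Longrightarrow> P a b \<in> Obj M"
  and p1_hom: "a \<in> Obj M \<Longrightarrow> b \<in> Obj M \<Longrightarrow> p1 a b \<in> hom M (P a b) a"
  and p2_hom: "a \<in> Obj M \<Longrightarrow> b \<in> Obj M \<Longrightarrow> p2 a b \<in> hom M (P a b) b"
  using prods unfolding has_chosen_products_def by auto

lemma mpair:
  assumes "a \<in> Obj M" "b \<in> Obj M" "f \<in> hom M c a" "g \<in> hom M c b"
  shows "mpair M P p1 p2 c a b f g \<in> hom M c (P a b)"
    "Comp M (p1 a b) (mpair M P p1 p2 c a b f g) = f"
    "Comp M (p2 a b) (mpair M P p1 p2 c a b f g) = g"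
proof -
  have c: "c \<in> Obj M" using assms hom_obj by blast
  have "\<exists>!h. h \<in> hom M c (P a b) \<and> Comp M (p1 a b) h = f \<and> Comp M (p2 a b) h = g"
    using prods assms c unfolding has_chosen_products_def by blast
  from theI'[OF this] show "mpair M P p1 p2 c a b f g \<in> hom M c (P a b)"
    "Comp M (p1 a b) (mpair M P p1 p2 c a b f g) = f"
    "Comp M (p2 a b) (mpair M P p1 p2 c a b f g) = g"
    unfolding mpair_def by auto
qed

lemma prod_ext:
  assumes "a \<in> Obj M" "b \<in> Obj M" "h \<in> hom M c (P a b)" "k \<in> hom M c (P a b)"
    "Comp M (p1 a b) h = Comp M (p1 a b) k" "Comp M (p2 a b) h = Comp M (p2 a b) k"
  shows "h = k"
proof -
  have c: "c \<in> Obj M" using assms hom_obj by blast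
  have "Comp M (p1 a b) h \<in> hom M c a" "Comp M (p2 a b) h \<in> hom M c b"
    using assms comp_hom p1_hom p2_hom by blast+
  then have "\<exists>!x. x \<in> hom M c (P a b) \<and> Comp M (p1 a b) x = Comp M (p1 a b) h \<and> Comp M (p2 a b) x = Comp M (p2 a b) h"
    using prods assms c unfolding has_chosen_products_def by blast
  then show ?thesis using assms by metis
qed

lemma mtens:
  assumes "f \<in> hom M a a'" "g \<in> hom M b b'"
  shows "mtens M P p1 p2 f g \<in> hom M (P a b) (P a' b')"
    "Comp M (p1 a' b') (mtens M P p1 p2 f g) = Comp M f (p1 a b)"
    "Comp M (p2 a' b') (mtens M P p1 p2 f g) = Comp M g (p2 a b)"
proof -
  have o: "a \<in> Obj M" "a' \<in> Obj M" "b \<in> Obj M" "b' \<in> Obj M" using assms hom_obj by blast+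
  have d: "Dom M f = a" "Cod M f = a'" "Dom M g = b" "Cod M g = b'" using assms hom_iff by metis+
  have h1: "Comp M f (p1 a b) \<in> hom M (P a b) a'" using comp_hom p1_hom o assms by blast
  have h2: "Comp M g (p2 a b) \<in> hom M (P a b) b'" using comp_hom p2_hom o assms by blast
  show "mtens M P p1 p2 f g \<in> hom M (P a b) (P a' b')"
    "Comp M (p1 a' b') (mtens M P p1 p2 f g) = Comp M f (p1 a b)"
    "Comp M (p2 a' b') (mtens M P p1 p2 f g) = Comp M g (p2 a b)"
    unfolding mtens_def d using mpair[OF o(2) o(4) h1 h2] by auto
qed

lemma massoc:
  assumes "a \<in> Obj M" "b \<in> Obj M" "c \<in> Obj M"
  shows "massoc M P p1 p2 a b c \<in> hom M (P (P a b) c) (P a (P b c))"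
    "Comp M (p1 a (P b c)) (massoc M P p1 p2 a b c) = Comp M (p1 a b) (p1 (P a b) c)"
    "Comp M (p1 b c) (Comp M (p2 a (P b c)) (massoc M P p1 p2 a b c)) = Comp M (p2 a b) (p1 (P a b) c)"
    "Comp M (p2 b c) (Comp M (p2 a (P b c)) (massoc M P p1 p2 a b c)) = p2 (P a b) c"
proof -
  have ab: "P a b \<in> Obj M" "P b c \<in> Obj M" using P_obj assms by auto
  have f: "Comp M (p1 a b) (p1 (P a b) c) \<in> hom M (P (P a b) c) a"
    using comp_hom p1_hom assms ab by blast
  have g1: "Comp M (p2 a b) (p1 (P a b) c) \<in> hom M (P (P a b) c) b"
    using comp_hom p1_hom p2_hom assms ab by blast
  have g2: "p2 (P a b) c \<in> hom M (P (P a b) c) c" using p2_hom ab assms by blast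
  note G = mpair[OF assms(2,3) g1 g2]
  note F = mpair[OF assms(1) ab(2) f G(1)]
  show "massoc M P p1 p2 a b c \<in> hom M (P (P a b) c) (P a (P b c))"
    "Comp M (p1 a (P b c)) (massoc M P p1 p2 a b c) = Comp M (p1 a b) (p1 (P a b) c)"
    "Comp M (p1 b c) (Comp M (p2 a (P b c)) (massoc M P p1 p2 a b c)) = Comp M (p2 a b) (p1 (P a b) c)"
    "Comp M (p2 b c) (Comp M (p2 a (P b c)) (massoc M P p1 p2 a b c)) = p2 (P a b) c"
    unfolding massoc_def using F G by auto
qed

lemma msym:
  assumes "a \<in> Obj M" "b \<in> Obj M"
  shows "msym M P p1 p2 a b \<in> hom M (P a b) (P b a)"
    "Comp M (p1 b a) (msym M P p1 p2 a b) = p2 a b"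
    "Comp M (p2 b a) (msym M P p1 p2 a b) = p1 a b"
  unfolding msym_def using mpair[OF assms(2,1) p2_hom[OF assms] p1_hom[OF assms]] by auto

end


lemma Phi_simps[simp]:
  "Obj Phi = UNIV"
  "(n, m, f) \<in> Arr Phi \<longleftrightarrow> f \<in> {..<n} \<rightarrow>\<^sub>E {..<m}"
  "Dom Phi (n, m, f) = n" "Cod Phi (n, m, f) = m"
  "Ide Phi n = (n, n, restrict id {..<n})"
  "Comp Phi (m', k, g) (n, m, f) = (n, k, restrict (g \<circ> f) {..<n})"
  by (simp_all add: Phi_def)

lemma Gamma_simps[simp]:
  "Obj Gamma_op = UNIV"
  "(n, m, f) \<in> Arr Gamma_op \<longleftrightarrow> f \<in> {..n} \<rightarrow>\<^sub>E {..m} \<and> f 0 = 0"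
  "Dom Gamma_op (n, m, f) = n" "Cod Gamma_op (n, m, f) = m"
  "Ide Gamma_op n = (n, n, restrict id {..n})"
  "Comp Gamma_op (m', k, g) (n, m, f) = (n, k, restrict (g \<circ> f) {..n})"
  by (simp_all add: Gamma_op_def)

lemma phi_plus_simp: "phi_plus (a, a', f) (b, b', g) =
     (a + b, a' + b', \<lambda>i\<in>{..<a + b}. if i < a then f i else a' + g (i - a))"
  by (simp add: phi_plus_def)

lemma phi_plus_arr: "(a, a', f) \<in> Arr Phi \<Longrightarrow> (b, b', g) \<in> Arr Phi \<Longrightarrow>
   phi_plus (a, a', f) (b, b', g) \<in> Arr Phi"
  by (auto simp: phi_plus_simp PiE_def Pi_def)

lemma phi_swap_arr: "phi_swap a b \<in> Arr Phi"
  by (auto simp: phi_swap_def PiE_def Pi_def)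

definition bplus :: "farr \<Rightarrow> farr" where
  "bplus = (\<lambda>(n, m, f). (n, m, \<lambda>i\<in>{..n}. if i = 0 then 0 else Suc (f (i - 1))))"

definition betac :: "farr \<Rightarrow> farr" where
  "betac = (\<lambda>(m, n, g). (m, Suc n, \<lambda>i\<in>{..<m}. if g (Suc i) = 0 then n else g (Suc i) - 1))"

definition gc1 :: "nat \<Rightarrow> nat \<Rightarrow> farr" where
  "gc1 A B = (A + B, A, \<lambda>i\<in>{..A + B}. if i \<le> A then i else 0)"

definition gc2 :: "nat \<Rightarrow> nat \<Rightarrow> farr" where
  "gc2 A B = (A + B, B, \<lambda>i\<in>{..A + B}. if i \<le> A then 0 else i - A)"

lemma betac_arr: "(m, n, g) \<in> Arr Gamma_op \<Longrightarrow> betac (m, n, g) \<in> Arr Phi"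
proof -
  assume a: "(m, n, g) \<in> Arr Gamma_op"
  have "\<And>i. i < m \<Longrightarrow> g (Suc i) \<le> n"
  proof -
    fix i assume "i < m"
    then have "Suc i \<in> {..m}" by simp
    moreover have "g \<in> {..m} \<rightarrow>\<^sub>E {..n}" using a by simp
    ultimately show "g (Suc i) \<le> n" by (metis PiE_mem atMost_iff)
  qed
  then have "\<And>i. i < m \<Longrightarrow> (if g (Suc i) = 0 then n else g (Suc i) - 1) < Suc n"
    by fastforce
  then show ?thesis by (simp add: betac_def PiE_def Pi_def)
qed

lemma bplus_arr: "(n, m, f) \<in> Arr Phi \<Longrightarrow> bplus (n, m, f) \<in> Arr Gamma_op"
proof -
  assume a: "(n, m, f) \<in> Arr Phi"
  have "\<And>i. i < n \<Longrightarrow> f i < m"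
  proof -
    fix i assume "i < n"
    then have "i \<in> {..<n}" by simp
    moreover have "f \<in> {..<n} \<rightarrow>\<^sub>E {..<m}" using a by simp
    ultimately show "f i < m" by (metis PiE_mem lessThan_iff)
  qed
  then have "\<And>i. i \<le> n \<Longrightarrow> (if i = 0 then 0 else Suc (f (i - 1))) \<le> m"
    by (simp add: Suc_le_eq)
  then show ?thesis by (simp add: bplus_def PiE_def Pi_def)
qed

lemma gc1_arr: "gc1 A B \<in> Arr Gamma_op" and gc2_arr: "gc2 A B \<in> Arr Gamma_op"
  by (auto simp: gc1_def gc2_def PiE_def Pi_def)

definition cpi1 :: "('o,'m) cat \<Rightarrow> ('o \<Rightarrow> 'o \<Rightarrow> 'm) \<Rightarrow> ((nat \<Rightarrow> 'o) \<times> (farr \<Rightarrow> 'm))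
   \<Rightarrow> (nat \<Rightarrow> nat \<Rightarrow> 'm) \<Rightarrow> nat \<Rightarrow> nat \<Rightarrow> 'm" where
  "cpi1 M p X \<xi> A B = Comp M (p (fst X A) (fst X B)) (\<xi> A B)"

definition Yof :: "('o,'m) cat \<Rightarrow> ('o \<Rightarrow> 'o \<Rightarrow> 'm) \<Rightarrow> ('o,'m) colax \<Rightarrow> (nat \<Rightarrow> 'o) \<times> (farr \<Rightarrow> 'm)" where
  "Yof M p W = (case W of (X, \<xi>, \<xi>0) \<Rightarrow>
     (fst X, \<lambda>g. if g \<in> Arr Gamma_op then Comp M (cpi1 M p X \<xi> (fst (snd g)) 1) (snd X (betac g)) else undefined))"

locale colax = cprod +
  fixes X :: "(nat \<Rightarrow> 'o) \<times> (farr \<Rightarrow> 'm)" and \<xi> :: "nat \<Rightarrow> nat \<Rightarrow> 'm" and \<xi>0 :: 'm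
  assumes sc: "scolax_obj M one P p1 p2 (X, \<xi>, \<xi>0)"
begin

abbreviation "pi1 \<equiv> cpi1 M p1 X \<xi>"
abbreviation "pi2 \<equiv> cpi1 M p2 X \<xi>"

lemma Xfun: "is_functor Phi M X" and Xext: "ext_functor Phi X"
  and xi_hom: "\<xi> A B \<in> hom M (fst X (A + B)) (P (fst X A) (fst X B))"
  and xi0_hom: "\<xi>0 \<in> hom M (fst X 0) one"
  and xi_nat: "\<And>f g. f \<in> Arr Phi \<Longrightarrow> g \<in> Arr Phi \<Longrightarrow>
         Comp M (\<xi> (Cod Phi f) (Cod Phi g)) (snd X (phi_plus f g)) =
         Comp M (mtens M P p1 p2 (snd X f) (snd X g)) (\<xi> (Dom Phi f) (Dom Phi g))"
  and xi_coassoc: "Comp M (massoc M P p1 p2 (fst X A) (fst X B) (fst X C))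
           (Comp M (mtens M P p1 p2 (\<xi> A B) (Ide M (fst X C))) (\<xi> (A + B) C)) =
         Comp M (mtens M P p1 p2 (Ide M (fst X A)) (\<xi> B C)) (\<xi> A (B + C))"
  and xi_unitl: "Comp M (p2 one (fst X A)) (Comp M (mtens M P p1 p2 \<xi>0 (Ide M (fst X A))) (\<xi> 0 A))
             = Ide M (fst X A)"
  and xi_unitr: "Comp M (p1 (fst X A) one) (Comp M (mtens M P p1 p2 (Ide M (fst X A)) \<xi>0) (\<xi> A 0))
             = Ide M (fst X A)"
  and xi_sym: "Comp M (msym M P p1 p2 (fst X A) (fst X B)) (\<xi> A B) =
             Comp M (\<xi> B A) (snd X (phi_swap A B))"
  using sc unfolding scolax_obj_def by auto

lemma Xo: "fst X n \<in> Obj M"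
  using Xfun unfolding is_functor_def by auto

lemma Xa: "(n, m, f) \<in> Arr Phi \<Longrightarrow> snd X (n, m, f) \<in> hom M (fst X n) (fst X m)"
proof -
  assume a: "(n, m, f) \<in> Arr Phi"
  have "\<forall>f\<in>Arr Phi. snd X f \<in> hom M (fst X (Dom Phi f)) (fst X (Cod Phi f))"
    using Xfun unfolding is_functor_def by blast
  from bspec[OF this a] show ?thesis by simp
qed

lemma Xcomp: "(n, m, f) \<in> Arr Phi \<Longrightarrow> (m, k, g) \<in> Arr Phi \<Longrightarrow>
   snd X (n, k, restrict (g \<circ> f) {..<n}) = Comp M (snd X (m, k, g)) (snd X (n, m, f))"
proof -
  assume a: "(n, m, f) \<in> Arr Phi" "(m, k, g) \<in> Arr Phi"
  have "\<forall>f\<in>Arr Phi. \<forall>g\<in>Arr Phi. Cod Phi f = Dom Phi g \<longrightarrow>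
        snd X (Comp Phi g f) = Comp M (snd X g) (snd X f)"
    using Xfun unfolding is_functor_def by blast
  from bspec[OF bspec[OF this a(1)] a(2)]
  have "snd X (Comp Phi (m, k, g) (n, m, f)) = Comp M (snd X (m, k, g)) (snd X (n, m, f))"
    by simp
  then show ?thesis by simp
qed

lemma Xid: "snd X (n, n, restrict id {..<n}) = Ide M (fst X n)"
proof -
  have "\<forall>a\<in>Obj Phi. snd X (Ide Phi a) = Ide M (fst X a)"
    using Xfun unfolding is_functor_def by blast
  then show ?thesis by simp
qed

lemma pi1_hom: "pi1 A B \<in> hom M (fst X (A + B)) (fst X A)"
  unfolding cpi1_def using comp_hom[OF xi_hom p1_hom[OF Xo Xo]] .

lemma pi2_hom: "pi2 A B \<in> hom M (fst X (A + B)) (fst X B)"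
  unfolding cpi1_def using comp_hom[OF xi_hom p2_hom[OF Xo Xo]] .

lemma pi1_nat:
  assumes f: "(A, A', f) \<in> Arr Phi" and g: "(B, B', g) \<in> Arr Phi"
  shows "Comp M (pi1 A' B') (snd X (phi_plus (A, A', f) (B, B', g))) = Comp M (snd X (A, A', f)) (pi1 A B)"
proof -
  have fg: "phi_plus (A, A', f) (B, B', g) \<in> Arr Phi" using phi_plus_arr f g .
  have h: "snd X (phi_plus (A, A', f) (B, B', g)) \<in> hom M (fst X (A + B)) (fst X (A' + B'))"
    using Xa[of "A+B" "A'+B'"] fg by (simp add: phi_plus_simp)
  note T = mtens[OF Xa[OF f] Xa[OF g]]
  have "Comp M (pi1 A' B') (snd X (phi_plus (A, A', f) (B, B', g)))
     = Comp M (p1 (fst X A') (fst X B')) (Comp M (\<xi> A' B') (snd X (phi_plus (A, A', f) (B, B', g))))"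
    unfolding cpi1_def using assoc[OF h xi_hom p1_hom[OF Xo Xo]] by simp
  also have "\<dots> = Comp M (p1 (fst X A') (fst X B')) (Comp M (mtens M P p1 p2 (snd X (A, A', f)) (snd X (B, B', g))) (\<xi> A B))"
    using xi_nat[OF f g] by simp
  also have "\<dots> = Comp M (Comp M (snd X (A, A', f)) (p1 (fst X A) (fst X B))) (\<xi> A B)"
    using assoc[OF xi_hom T(1) p1_hom[OF Xo Xo]] T(2) by simp
  also have "\<dots> = Comp M (snd X (A, A', f)) (pi1 A B)"
    unfolding cpi1_def using assoc[OF xi_hom p1_hom[OF Xo Xo] Xa[OF f]] by simp
  finally show ?thesis .
qed

lemma pi1_unit: "pi1 A 0 = Ide M (fst X A)"
proof -
  note T = mtens[OF ide_hom[OF Xo] xi0_hom]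
  have "Ide M (fst X A) = Comp M (Comp M (p1 (fst X A) one) (mtens M P p1 p2 (Ide M (fst X A)) \<xi>0)) (\<xi> A 0)"
    using xi_unitr assoc[OF xi_hom T(1) p1_hom[OF Xo one_obj]] by simp
  also have "\<dots> = pi1 A 0"
    using T(2) idl[OF p1_hom[OF Xo Xo]] unfolding cpi1_def by simp
  finally show ?thesis by simp
qed

lemma pi2_unit: "pi2 0 A = Ide M (fst X A)"
proof -
  note T = mtens[OF xi0_hom ide_hom[OF Xo]]
  have "Ide M (fst X A) = Comp M (Comp M (p2 one (fst X A)) (mtens M P p1 p2 \<xi>0 (Ide M (fst X A)))) (\<xi> 0 A)"
    using xi_unitl assoc[OF xi_hom T(1) p2_hom[OF one_obj Xo]] by simp
  also have "\<dots> = pi2 0 A"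
    using T(3) idl[OF p2_hom[OF Xo Xo]] unfolding cpi1_def by simp
  finally show ?thesis by simp
qed

lemma pi1_coassoc: "Comp M (pi1 a b) (pi1 (a + b) c) = pi1 a (b + c)"
proof -
  let ?a = "fst X a" and ?b = "fst X b" and ?c = "fst X c"
  note T = mtens[OF xi_hom[of a b] ide_hom[OF Xo[of c]]]
  note S = mtens[OF ide_hom[OF Xo[of a]] xi_hom[of b c]]
  note As = massoc[OF Xo Xo Xo, of a b c]
  have "pi1 a (b + c) = Comp M (p1 ?a (P ?b ?c)) (Comp M (mtens M P p1 p2 (Ide M (fst X a)) (\<xi> b c)) (\<xi> a (b + c)))"
    using assoc[OF xi_hom S(1) p1_hom[OF Xo P_obj[OF Xo Xo]]] S(2) idl[OF p1_hom[OF Xo Xo]]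
    unfolding cpi1_def by (simp add: add.assoc)
  also have "\<dots> = Comp M (p1 ?a (P ?b ?c)) (Comp M (massoc M P p1 p2 ?a ?b ?c)
           (Comp M (mtens M P p1 p2 (\<xi> a b) (Ide M ?c)) (\<xi> (a + b) c)))"
    using xi_coassoc by simp
  also have "\<dots> = Comp M (Comp M (p1 ?a ?b) (p1 (P ?a ?b) ?c))
           (Comp M (mtens M P p1 p2 (\<xi> a b) (Ide M ?c)) (\<xi> (a + b) c))"
    using assoc[OF comp_hom[OF xi_hom T(1)] As(1) p1_hom[OF Xo P_obj[OF Xo Xo]]] As(2) by simp
  also have "\<dots> = Comp M (p1 ?a ?b) (Comp M (Comp M (p1 (P ?a ?b) ?c)
           (mtens M P p1 p2 (\<xi> a b) (Ide M ?c))) (\<xi> (a + b) c))"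
    using assoc[OF comp_hom[OF xi_hom T(1)] p1_hom[OF P_obj[OF Xo Xo] Xo] p1_hom[OF Xo Xo]]
      assoc[OF xi_hom T(1) p1_hom[OF P_obj[OF Xo Xo] Xo]] by simp
  also have "\<dots> = Comp M (p1 ?a ?b) (Comp M (\<xi> a b) (pi1 (a + b) c))"
    using T(2) assoc[OF xi_hom p1_hom[OF Xo Xo] xi_hom] unfolding cpi1_def by simp
  also have "\<dots> = Comp M (pi1 a b) (pi1 (a + b) c)"
    using assoc[OF pi1_hom xi_hom p1_hom[OF Xo Xo]] unfolding cpi1_def by simp
  finally show ?thesis by simp
qed

lemma pi2_sym: "pi2 A B = Comp M (pi1 B A) (snd X (phi_swap A B))"
proof -
  note S = msym[OF Xo[of A] Xo[of B]]
  have sw: "snd X (phi_swap A B) \<in> hom M (fst X (A + B)) (fst X (B + A))"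
    using Xa phi_swap_arr by (simp add: phi_swap_def)
  have "pi2 A B = Comp M (Comp M (p1 (fst X B) (fst X A)) (msym M P p1 p2 (fst X A) (fst X B))) (\<xi> A B)"
    using S unfolding cpi1_def by simp
  also have "\<dots> = Comp M (p1 (fst X B) (fst X A)) (Comp M (\<xi> B A) (snd X (phi_swap A B)))"
    using assoc[OF xi_hom S(1) p1_hom[OF Xo Xo]] xi_sym by simp
  also have "\<dots> = Comp M (pi1 B A) (snd X (phi_swap A B))"
    using assoc[OF sw xi_hom p1_hom[OF Xo Xo]] unfolding cpi1_def by simp
  finally show ?thesis .
qed

end


lemma betac_simp: "betac (m, n, g) = (m, Suc n, \<lambda>i\<in>{..<m}. if g (Suc i) = 0 then n else g (Suc i) - 1)"
  by (simp add: betac_def)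

context colax
begin

abbreviation "Y \<equiv> Yof M p1 (X, \<xi>, \<xi>0)"

lemma Yo: "fst Y = fst X"
  by (simp add: Yof_def)

lemma Ya: "(m, n, g) \<in> Arr Gamma_op \<Longrightarrow> snd Y (m, n, g) = Comp M (pi1 n 1) (snd X (betac (m, n, g)))"
  by (simp add: Yof_def)

lemma Xbetac: "(m, n, g) \<in> Arr Gamma_op \<Longrightarrow> snd X (betac (m, n, g)) \<in> hom M (fst X m) (fst X (n + 1))"
  using Xa betac_arr[of m n g] by (simp add: betac_simp)

lemma Y_hom: "(m, n, g) \<in> Arr Gamma_op \<Longrightarrow> snd Y (m, n, g) \<in> hom M (fst X m) (fst X n)"
  using Ya comp_hom[OF Xbetac pi1_hom] by simp

lemma Y_id: "snd Y (n, n, restrict id {..n}) = Ide M (fst X n)"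
proof -
  have a: "(n, n, restrict id {..n}) \<in> Arr Gamma_op" by simp
  have e: "betac (n, n, restrict id {..n}) = phi_plus (n, n, restrict id {..<n}) (0, 1, \<lambda>i\<in>{..<0}. 0)"
    by (auto simp: betac_simp phi_plus_simp fun_eq_iff)
  have a1: "(n, n, restrict id {..<n}) \<in> Arr Phi" by simp
  have a2: "(0::nat, 1::nat, \<lambda>i\<in>{..<0::nat}. 0::nat) \<in> Arr Phi" by (simp add: restrict_def PiE_def extensional_def)
  have "snd Y (n, n, restrict id {..n}) = Comp M (pi1 n 1) (snd X (phi_plus (n, n, restrict id {..<n}) (0, 1, \<lambda>i\<in>{..<0}. 0)))"
    using Ya[OF a] e by simp
  also have "\<dots> = Comp M (snd X (n, n, restrict id {..<n})) (pi1 n 0)"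
    using pi1_nat[OF a1 a2] by simp
  also have "\<dots> = Ide M (fst X n)"
    using Xid pi1_unit idl[OF ide_hom[OF Xo]] by simp
  finally show ?thesis .
qed

lemma Y_comp:
  assumes g: "(m, n, g) \<in> Arr Gamma_op" and h: "(n, k, h) \<in> Arr Gamma_op"
  shows "snd Y (m, k, restrict (h \<circ> g) {..m}) = Comp M (snd Y (n, k, h)) (snd Y (m, n, g))"
proof -
  have hg: "(m, k, restrict (h \<circ> g) {..m}) \<in> Arr Gamma_op"
    using g h by (auto simp: PiE_def Pi_def)
  define bg where "bg = (\<lambda>i\<in>{..<m}. if g (Suc i) = 0 then n else g (Suc i) - 1)"
  define bh where "bh = (\<lambda>i\<in>{..<n}. if h (Suc i) = 0 then k else h (Suc i) - 1)"
  define id1 where "id1 = (\<lambda>i\<in>{..<1::nat}. i)"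
  define c21 where "c21 = (\<lambda>i\<in>{..<2::nat}. 0::nat)"
  define idk where "idk = (\<lambda>i\<in>{..<k}. i)"
  have Bg: "(m, Suc n, bg) \<in> Arr Phi" using betac_arr[OF g] by (simp add: betac_simp bg_def)
  have Bh: "(n, Suc k, bh) \<in> Arr Phi" using betac_arr[OF h] by (simp add: betac_simp bh_def)
  have I1: "(1, 1, id1) \<in> Arr Phi" by (simp add: id1_def)
  have C21: "(2, 1, c21) \<in> Arr Phi" by (simp add: c21_def)
  have Ik: "(k, k, idk) \<in> Arr Phi" by (simp add: idk_def)
  have X1: "snd X (1, 1, id1) = Ide M (fst X 1)" using Xid[of 1] by (simp add: id1_def id_def)
  have Xk: "snd X (k, k, idk) = Ide M (fst X k)" using Xid[of k] by (simp add: idk_def id_def)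
  have Yg: "snd Y (m, n, g) = Comp M (pi1 n 1) (snd X (m, Suc n, bg))"
    using Ya[OF g] by (simp add: betac_simp bg_def)
  have Yh: "snd Y (n, k, h) = Comp M (pi1 k 1) (snd X (n, Suc k, bh))"
    using Ya[OF h] by (simp add: betac_simp bh_def)
  define p where "p = phi_plus (n, Suc k, bh) (1, 1, id1)"
  define q where "q = phi_plus (k, k, idk) (2, 1, c21)"
  have p: "p = (Suc n, Suc (Suc k), \<lambda>i\<in>{..<Suc n}. if i < n then bh i else Suc k + id1 (i - n))"
    by (simp add: p_def phi_plus_simp)
  have q: "q = (Suc (Suc k), Suc k, \<lambda>i\<in>{..<Suc (Suc k)}. if i < k then idk i else k + c21 (i - k))"
    by (simp add: q_def phi_plus_simp)
  have P: "(Suc n, Suc (Suc k), snd (snd p)) \<in> Arr Phi" using phi_plus_arr[OF Bh I1] p p_def by simp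
  have Q: "(Suc (Suc k), Suc k, snd (snd q)) \<in> Arr Phi" using phi_plus_arr[OF Ik C21] q q_def by simp
  have hBg: "snd X (m, Suc n, bg) \<in> hom M (fst X m) (fst X (Suc n))" using Xa[OF Bg] .
  have hBh: "snd X (n, Suc k, bh) \<in> hom M (fst X n) (fst X (Suc k))" using Xa[OF Bh] .
  have hP: "snd X p \<in> hom M (fst X (Suc n)) (fst X (Suc (Suc k)))" using Xa[OF P] p by simp
  have hQ: "snd X q \<in> hom M (fst X (Suc (Suc k))) (fst X (Suc k))" using Xa[OF Q] q by simp
  have pin: "pi1 n 1 \<in> hom M (fst X (Suc n)) (fst X n)" using pi1_hom[of n 1] by simp
  have pik: "pi1 k 1 \<in> hom M (fst X (Suc k)) (fst X k)" using pi1_hom[of k 1] by simp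
  have pik1: "pi1 (Suc k) 1 \<in> hom M (fst X (Suc (Suc k))) (fst X (Suc k))" using pi1_hom[of "Suc k" 1] by simp
  have pik2: "pi1 k 2 \<in> hom M (fst X (Suc (Suc k))) (fst X k)" using pi1_hom[of k 2] by simp
  have s1: "Comp M (snd X (n, Suc k, bh)) (pi1 n 1) = Comp M (pi1 (Suc k) 1) (snd X p)"
    using pi1_nat[OF Bh I1] unfolding p_def by simp
  have s2: "Comp M (pi1 k 1) (pi1 (Suc k) 1) = pi1 k 2"
    using pi1_coassoc[of k 1 1] by (simp add: numeral_2_eq_2)
  have s3: "Comp M (pi1 k 1) (snd X q) = pi1 k 2"
    using pi1_nat[OF Ik C21] Xk idl[OF pik2] unfolding q_def by simp
  have comp1: "snd X (m, Suc (Suc k), restrict (snd (snd p) \<circ> bg) {..<m}) = Comp M (snd X p) (snd X (m, Suc n, bg))"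
    using Xcomp[OF Bg P] p by simp
  have PB: "(m, Suc (Suc k), restrict (snd (snd p) \<circ> bg) {..<m}) \<in> Arr Phi"
    using Bg P by (auto simp: PiE_def Pi_def)
  have comp2: "snd X (m, Suc k, restrict (snd (snd q) \<circ> restrict (snd (snd p) \<circ> bg) {..<m}) {..<m}) =
     Comp M (snd X q) (Comp M (snd X p) (snd X (m, Suc n, bg)))"
    using Xcomp[OF PB Q] comp1 q by simp
  have eqb: "restrict (snd (snd q) \<circ> restrict (snd (snd p) \<circ> bg) {..<m}) {..<m}
     = (\<lambda>i\<in>{..<m}. if restrict (h \<circ> g) {..m} (Suc i) = 0 then k else restrict (h \<circ> g) {..m} (Suc i) - 1)"
  proof
    fix i
    show "restrict (snd (snd q) \<circ> restrict (snd (snd p) \<circ> bg) {..<m}) {..<m} i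
     = (\<lambda>i\<in>{..<m}. if restrict (h \<circ> g) {..m} (Suc i) = 0 then k else restrict (h \<circ> g) {..m} (Suc i) - 1) i"
    proof (cases "i < m")
      case False then show ?thesis by simp
    next
      case True
      have gi: "g (Suc i) \<le> n" using g True by (auto simp: PiE_def Pi_def)
      have h0: "h 0 = 0" using h by simp
      have hi: "\<And>j. j \<le> n \<Longrightarrow> h j \<le> k" using h by (auto simp: PiE_def Pi_def)
      show ?thesis
      proof (cases "g (Suc i) = 0")
        case True2: True
        then show ?thesis using True h0 by (simp add: p q bg_def id1_def c21_def idk_def)
      next
        case False2: False
        then have lt: "g (Suc i) - 1 < n" using gi by simp
        have hh: "h (g (Suc i)) \<le> k" using hi gi .
        have e: "Suc (g (Suc i) - 1) = g (Suc i)" using False2 by simp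
        show ?thesis using True False2 lt hh
          by (auto simp: p q bg_def bh_def id1_def c21_def idk_def e)
      qed
    qed
  qed
  have "Comp M (snd Y (n, k, h)) (snd Y (m, n, g))
      = Comp M (pi1 k 1) (Comp M (Comp M (snd X (n, Suc k, bh)) (pi1 n 1)) (snd X (m, Suc n, bg)))"
    unfolding Yg Yh
    using assoc[OF comp_hom[OF hBg pin] hBh pik] assoc[OF hBg pin hBh] by simp
  also have "\<dots> = Comp M (Comp M (pi1 k 1) (pi1 (Suc k) 1)) (Comp M (snd X p) (snd X (m, Suc n, bg)))"
    unfolding s1 using assoc[OF hBg hP pik1] assoc[OF comp_hom[OF hBg hP] pik1 pik] by simp
  also have "\<dots> = Comp M (Comp M (pi1 k 1) (snd X q)) (Comp M (snd X p) (snd X (m, Suc n, bg)))"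
    unfolding s2 s3 ..
  also have "\<dots> = Comp M (pi1 k 1) (Comp M (snd X q) (Comp M (snd X p) (snd X (m, Suc n, bg))))"
    using assoc[OF comp_hom[OF hBg hP] hQ pik] by simp
  also have "\<dots> = Comp M (pi1 k 1) (snd X (betac (m, k, restrict (h \<circ> g) {..m})))"
    unfolding comp2[symmetric] eqb betac_simp ..
  also have "\<dots> = snd Y (m, k, restrict (h \<circ> g) {..m})"
    using Ya[OF hg] by simp
  finally show ?thesis by simp
qed

lemma Y_functor: "is_functor Gamma_op M Y"
  unfolding is_functor_def
proof (intro conjI ballI impI)
  fix a show "fst Y a \<in> Obj M" using Yo Xo by simp
next
  fix f assume "f \<in> Arr Gamma_op"
  then obtain m n g where f: "f = (m, n, g)" "(m, n, g) \<in> Arr Gamma_op" by (cases f) auto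
  then show "snd Y f \<in> hom M (fst Y (Dom Gamma_op f)) (fst Y (Cod Gamma_op f))"
    using Y_hom Yo by simp
next
  fix a show "snd Y (Ide Gamma_op a) = Ide M (fst Y a)" using Y_id Yo by simp
next
  fix f g assume "f \<in> Arr Gamma_op" "g \<in> Arr Gamma_op" "Cod Gamma_op f = Dom Gamma_op g"
  then obtain m n f' k g' where "f = (m, n, f')" "g = (n, k, g')" "(m, n, f') \<in> Arr Gamma_op" "(n, k, g') \<in> Arr Gamma_op"
    by (cases f, cases g) auto
  then show "snd Y (Comp Gamma_op g f) = Comp M (snd Y g) (snd Y f)"
    using Y_comp by simp
qed

lemma Y_ext: "ext_functor Gamma_op Y"
  unfolding ext_functor_def by (simp add: Yof_def)

end


lemma bplus_simp: "bplus (n, m, f) = (n, m, \<lambda>i\<in>{..n}. if i = 0 then 0 else Suc (f (i - 1)))"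
  by (simp add: bplus_def)

lemma PhiE: "(n, m, f) \<in> Arr Phi \<Longrightarrow> i < n \<Longrightarrow> f i < m"
  by (metis Phi_simps(2) PiE_mem lessThan_iff)

lemma bplus_comp: assumes f: "(n, m, f) \<in> Arr Phi" and g: "(m, k, g) \<in> Arr Phi"
  shows "bplus (n, k, restrict (g \<circ> f) {..<n}) = Comp Gamma_op (bplus (m, k, g)) (bplus (n, m, f))"
proof -
  have "\<And>i. i \<le> n \<Longrightarrow> 0 < i \<Longrightarrow> f (i - 1) < m" using PhiE[OF f] by simp
  then show ?thesis unfolding bplus_simp Gamma_simps
    by (auto simp: fun_eq_iff Suc_le_eq)
qed

lemma bplus_id: "bplus (n, n, restrict id {..<n}) = (n, n, restrict id {..n})"
  unfolding bplus_simp by (auto simp: fun_eq_iff)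

lemma gtriple_eq: "(\<And>i. i \<le> n \<Longrightarrow> F i = G i) \<Longrightarrow> (n, k, restrict F {..n}) = (n, k, restrict G {..n})"
  by (simp add: fun_eq_iff restrict_def)

lemma gamma_nat1: assumes f: "(A, A', f) \<in> Arr Phi" and g: "(B, B', g) \<in> Arr Phi"
  shows "Comp Gamma_op (gc1 A' B') (bplus (phi_plus (A, A', f) (B, B', g))) = Comp Gamma_op (bplus (A, A', f)) (gc1 A B)"
proof -
  have F: "\<And>i. i < A \<Longrightarrow> f i < A'" using PhiE[OF f] by simp
  show ?thesis unfolding bplus_simp gc1_def phi_plus_simp Gamma_simps
  proof (rule gtriple_eq)
    fix i assume i: "i \<le> A + B"
    show "((\<lambda>i\<in>{..A' + B'}. if i \<le> A' then i else 0) \<circ>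
             (\<lambda>i\<in>{..A + B}. if i = 0 then 0 else Suc ((\<lambda>i\<in>{..<A + B}. if i < A then f i else A' + g (i - A)) (i - 1)))) i =
          ((\<lambda>i\<in>{..A}. if i = 0 then 0 else Suc (f (i - 1))) \<circ> (\<lambda>i\<in>{..A + B}. if i \<le> A then i else 0)) i"
    proof (cases "i = 0")
      case True then show ?thesis by simp
    next
      case nz: False
      show ?thesis
      proof (cases "i \<le> A")
        case True
        then have "f (i - 1) < A'" using F nz by simp
        moreover have "i - 1 < A" using True nz by simp
        ultimately show ?thesis using True nz i by (simp add: Suc_le_eq)
      next
        case False
        have G: "\<And>i. i < B \<Longrightarrow> g i < B'" using PhiE[OF g] by simp
        have "g (i - Suc A) < B'" using G nz i False by simp
        moreover have "\<not> i - 1 < A" "i - 1 < A + B"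
          using False nz i by auto
        ultimately show ?thesis using nz i False by (simp add: Suc_le_eq)
      qed
    qed
  qed
qed


lemma gamma_nat2: assumes f: "(A, A', f) \<in> Arr Phi" and g: "(B, B', g) \<in> Arr Phi"
  shows "Comp Gamma_op (gc2 A' B') (bplus (phi_plus (A, A', f) (B, B', g))) = Comp Gamma_op (bplus (B, B', g)) (gc2 A B)"
proof -
  have F: "\<And>i. i < A \<Longrightarrow> f i < A'" using PhiE[OF f] by simp
  have G: "\<And>i. i < B \<Longrightarrow> g i < B'" using PhiE[OF g] by simp
  show ?thesis unfolding bplus_simp gc2_def phi_plus_simp Gamma_simps
  proof (rule gtriple_eq)
    fix i assume i: "i \<le> A + B"
    show "((\<lambda>i\<in>{..A' + B'}. if i \<le> A' then 0 else i - A') \<circ>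
             (\<lambda>i\<in>{..A + B}. if i = 0 then 0 else Suc ((\<lambda>i\<in>{..<A + B}. if i < A then f i else A' + g (i - A)) (i - 1)))) i =
          ((\<lambda>i\<in>{..B}. if i = 0 then 0 else Suc (g (i - 1))) \<circ> (\<lambda>i\<in>{..A + B}. if i \<le> A then 0 else i - A)) i"
    proof (cases "i = 0")
      case True then show ?thesis by simp
    next
      case nz: False
      show ?thesis
      proof (cases "i \<le> A")
        case True
        then have "f (i - 1) < A'" using F nz by simp
        moreover have "i - 1 < A" using True nz by simp
        ultimately show ?thesis using True nz i by (simp add: Suc_le_eq)
      next
        case False
        then have "g (i - 1 - A) < B'" using G nz i by simp
        moreover have "\<not> i - 1 < A" "i - 1 < A + B" "i - A - 1 = i - 1 - A" "i - A \<noteq> 0" "i - A \<le> B"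
          using False nz i by auto
        ultimately show ?thesis using nz i False by (simp add: Suc_le_eq)
      qed
    qed
  qed
qed

lemma gamma_c1: "Comp Gamma_op (gc1 A B) (gc1 (A + B) C) = gc1 A (B + C)"
  unfolding gc1_def Gamma_simps add.assoc[symmetric]
  by (rule gtriple_eq) auto

lemma gamma_c2: "Comp Gamma_op (gc2 A B) (gc1 (A + B) C) = Comp Gamma_op (gc1 B C) (gc2 A (B + C))"
  unfolding gc1_def gc2_def Gamma_simps add.assoc[symmetric]
  by (rule gtriple_eq) auto

lemma gamma_c3: "gc2 (A + B) C = Comp Gamma_op (gc2 B C) (gc2 A (B + C))"
  unfolding gc1_def gc2_def Gamma_simps add.assoc[symmetric]
  by (rule gtriple_eq) auto

lemma gamma_u1: "gc2 0 A = (A, A, restrict id {..A})"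
  unfolding gc2_def by (simp add: fun_eq_iff restrict_def)

lemma gamma_u2: "gc1 A 0 = (A, A, restrict id {..A})"
  unfolding gc1_def by (simp add: fun_eq_iff restrict_def)

lemma gamma_s1: "Comp Gamma_op (gc1 B A) (bplus (phi_swap A B)) = gc2 A B"
  unfolding gc1_def gc2_def phi_swap_def bplus_simp Gamma_simps
  by (rule gtriple_eq) auto

lemma gamma_s2: "Comp Gamma_op (gc2 B A) (bplus (phi_swap A B)) = gc1 A B"
  unfolding gc1_def gc2_def phi_swap_def bplus_simp Gamma_simps
  by (rule gtriple_eq) auto

lemma rt_bplus: assumes f: "(n, m, f) \<in> Arr Phi"
  shows "betac (bplus (n, m, f)) = phi_plus (n, m, f) (0, 1, \<lambda>i\<in>{..<0}. 0)"
proof -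
  have "f \<in> extensional {..<n}" using f by (simp add: PiE_def)
  then show ?thesis unfolding bplus_simp betac_simp phi_plus_simp
    by (auto simp: fun_eq_iff extensional_def)
qed

lemma rt_gc1: "betac (gc1 A B) = phi_plus (A, A, restrict id {..<A}) (B, 1, \<lambda>i\<in>{..<B}. 0)"
  unfolding gc1_def betac_simp phi_plus_simp by (auto simp: fun_eq_iff)

lemma rt_gc2: "betac (gc2 A B) = Comp Phi (phi_plus (B, B, restrict id {..<B}) (A, 1, \<lambda>i\<in>{..<A}. 0)) (phi_swap A B)"
  unfolding gc2_def betac_simp phi_plus_simp phi_swap_def Phi_simps by (auto simp: fun_eq_iff)

lemma rt_gamma: assumes g: "(m, n, g) \<in> Arr Gamma_op"
  shows "Comp Gamma_op (gc1 n 1) (bplus (betac (m, n, g))) = (m, n, g)"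
proof -
  have e: "g \<in> extensional {..m}" and g0: "g 0 = 0" using g by (auto simp: PiE_def)
  have r: "\<And>i. i \<le> m \<Longrightarrow> g i \<le> n" using g by (auto simp: PiE_def Pi_def)
  have "restrict g {..m} = g" using e by (simp add: restrict_def extensional_def fun_eq_iff)
  moreover have "Comp Gamma_op (gc1 n 1) (bplus (betac (m, n, g))) = (m, n, restrict g {..m})"
    unfolding gc1_def betac_simp bplus_simp Gamma_simps
  proof (rule gtriple_eq)
    fix i assume i: "i \<le> m"
    show "((\<lambda>i\<in>{..n + 1}. if i \<le> n then i else 0) \<circ>
          (\<lambda>i\<in>{..m}. if i = 0 then 0 else Suc ((\<lambda>i\<in>{..<m}. if g (Suc i) = 0 then n else g (Suc i) - 1) (i - 1)))) i = g i"
    proof (cases "i = 0")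
      case True then show ?thesis using g0 by simp
    next
      case False
      then have "Suc (i - 1) = i" "i - 1 < m" using i by auto
      then show ?thesis using r[OF i] i False by auto
    qed
  qed
  ultimately show ?thesis by simp
qed


context cprod begin

lemma tens_p1_k: assumes k: "k \<in> hom M z (P a b)" and f: "f \<in> hom M a a'" and g: "g \<in> hom M b b'"
  shows "Comp M (p1 a' b') (Comp M (mtens M P p1 p2 f g) k) = Comp M f (Comp M (p1 a b) k)"
proof -
  have o: "a \<in> Obj M" "b \<in> Obj M" "a' \<in> Obj M" "b' \<in> Obj M" using f g hom_obj by blast+
  note T = mtens[OF f g]
  have "Comp M (p1 a' b') (Comp M (mtens M P p1 p2 f g) k) = Comp M (Comp M (p1 a' b') (mtens M P p1 p2 f g)) k"
    using assoc[OF k T(1) p1_hom[OF o(3,4)]] .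
  also have "\<dots> = Comp M (Comp M f (p1 a b)) k" using T(2) by simp
  also have "\<dots> = Comp M f (Comp M (p1 a b) k)" using assoc[OF k p1_hom[OF o(1,2)] f] by simp
  finally show ?thesis .
qed

lemma tens_p2_k: assumes k: "k \<in> hom M z (P a b)" and f: "f \<in> hom M a a'" and g: "g \<in> hom M b b'"
  shows "Comp M (p2 a' b') (Comp M (mtens M P p1 p2 f g) k) = Comp M g (Comp M (p2 a b) k)"
proof -
  have o: "a \<in> Obj M" "b \<in> Obj M" "a' \<in> Obj M" "b' \<in> Obj M" using f g hom_obj by blast+
  note T = mtens[OF f g]
  have "Comp M (p2 a' b') (Comp M (mtens M P p1 p2 f g) k) = Comp M (Comp M (p2 a' b') (mtens M P p1 p2 f g)) k"
    using assoc[OF k T(1) p2_hom[OF o(3,4)]] .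
  also have "\<dots> = Comp M (Comp M g (p2 a b)) k" using T(3) by simp
  also have "\<dots> = Comp M g (Comp M (p2 a b) k)" using assoc[OF k p2_hom[OF o(1,2)] g] by simp
  finally show ?thesis .
qed

lemma massoc_k: assumes k: "k \<in> hom M z (P (P a b) c)" and o: "a \<in> Obj M" "b \<in> Obj M" "c \<in> Obj M"
  shows "Comp M (p1 a (P b c)) (Comp M (massoc M P p1 p2 a b c) k) = Comp M (p1 a b) (Comp M (p1 (P a b) c) k)"
    "Comp M (p1 b c) (Comp M (p2 a (P b c)) (Comp M (massoc M P p1 p2 a b c) k)) = Comp M (p2 a b) (Comp M (p1 (P a b) c) k)"
    "Comp M (p2 b c) (Comp M (p2 a (P b c)) (Comp M (massoc M P p1 p2 a b c) k)) = Comp M (p2 (P a b) c) k"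
proof -
  note A = massoc[OF o]
  have ab: "P a b \<in> Obj M" "P b c \<in> Obj M" using P_obj o by auto
  have x: "p2 a (P b c) \<in> hom M (P a (P b c)) (P b c)" using p2_hom o ab by auto
  have y: "Comp M (p2 a (P b c)) (massoc M P p1 p2 a b c) \<in> hom M (P (P a b) c) (P b c)" using comp_hom[OF A(1) x] .
  show "Comp M (p1 a (P b c)) (Comp M (massoc M P p1 p2 a b c) k) = Comp M (p1 a b) (Comp M (p1 (P a b) c) k)"
    using assoc[OF k A(1) p1_hom[OF o(1) ab(2)]] A(2) assoc[OF k p1_hom[OF ab(1) o(3)] p1_hom[OF o(1,2)]] by simp
  have "Comp M (p2 a (P b c)) (Comp M (massoc M P p1 p2 a b c) k) = Comp M (Comp M (p2 a (P b c)) (massoc M P p1 p2 a b c)) k"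
    using assoc[OF k A(1) x] .
  then have e: "Comp M (pp (p2 a (P b c))) (Comp M (massoc M P p1 p2 a b c) k) = Comp M (Comp M (p2 a (P b c)) (massoc M P p1 p2 a b c)) k" if "pp = id" for pp
    using that by simp
  show "Comp M (p1 b c) (Comp M (p2 a (P b c)) (Comp M (massoc M P p1 p2 a b c) k)) = Comp M (p2 a b) (Comp M (p1 (P a b) c) k)"
    using e[OF refl] assoc[OF k y p1_hom[OF o(2,3)]] A(3) assoc[OF k p1_hom[OF ab(1) o(3)] p2_hom[OF o(1,2)]] by simp
  show "Comp M (p2 b c) (Comp M (p2 a (P b c)) (Comp M (massoc M P p1 p2 a b c) k)) = Comp M (p2 (P a b) c) k"
    using e[OF refl] assoc[OF k y p2_hom[OF o(2,3)]] A(4) by simp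
qed

lemma msym_k: assumes k: "k \<in> hom M z (P a b)" and o: "a \<in> Obj M" "b \<in> Obj M"
  shows "Comp M (p1 b a) (Comp M (msym M P p1 p2 a b) k) = Comp M (p2 a b) k"
    "Comp M (p2 b a) (Comp M (msym M P p1 p2 a b) k) = Comp M (p1 a b) k"
  using msym[OF o] assoc[OF k msym(1)[OF o] p1_hom[OF o(2,1)]] assoc[OF k msym(1)[OF o] p2_hom[OF o(2,1)]] by simp_all

lemma p_k: assumes k: "k \<in> hom M z c" and h: "h \<in> hom M c (P a b)" and o: "a \<in> Obj M" "b \<in> Obj M"
  shows "Comp M (p1 a b) (Comp M h k) = Comp M (Comp M (p1 a b) h) k"
    "Comp M (p2 a b) (Comp M h k) = Comp M (Comp M (p2 a b) h) k"
  using assoc[OF k h p1_hom[OF o]] assoc[OF k h p2_hom[OF o]] by simp_all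

end

definition Xof :: "(nat \<Rightarrow> 'o) \<times> (farr \<Rightarrow> 'm) \<Rightarrow> (nat \<Rightarrow> 'o) \<times> (farr \<Rightarrow> 'm)" where
  "Xof Y = (fst Y, \<lambda>f. if f \<in> Arr Phi then snd Y (bplus f) else undefined)"

definition xiof :: "('o,'m) cat \<Rightarrow> ('o \<Rightarrow> 'o \<Rightarrow> 'o) \<Rightarrow> ('o \<Rightarrow> 'o \<Rightarrow> 'm) \<Rightarrow> ('o \<Rightarrow> 'o \<Rightarrow> 'm)
   \<Rightarrow> (nat \<Rightarrow> 'o) \<times> (farr \<Rightarrow> 'm) \<Rightarrow> nat \<Rightarrow> nat \<Rightarrow> 'm" where
  "xiof M P p1 p2 Y = (\<lambda>A B. mpair M P p1 p2 (fst Y (A + B)) (fst Y A) (fst Y B) (snd Y (gc1 A B)) (snd Y (gc2 A B)))"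

definition xi0of :: "('o,'m) cat \<Rightarrow> 'o \<Rightarrow> (nat \<Rightarrow> 'o) \<times> (farr \<Rightarrow> 'm) \<Rightarrow> 'm" where
  "xi0of M one Y = (THE t. t \<in> hom M (fst Y 0) one)"

definition Gof :: "('o,'m) cat \<Rightarrow> 'o \<Rightarrow> ('o \<Rightarrow> 'o \<Rightarrow> 'o) \<Rightarrow> ('o \<Rightarrow> 'o \<Rightarrow> 'm) \<Rightarrow> ('o \<Rightarrow> 'o \<Rightarrow> 'm)
   \<Rightarrow> (nat \<Rightarrow> 'o) \<times> (farr \<Rightarrow> 'm) \<Rightarrow> ('o,'m) colax" where
  "Gof M one P p1 p2 Y = (Xof Y, xiof M P p1 p2 Y, xi0of M one Y)"

locale gfun = cprod +
  fixes Y :: "(nat \<Rightarrow> 'o) \<times> (farr \<Rightarrow> 'm)"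
  assumes Yfun: "is_functor Gamma_op M Y" and Yext: "ext_functor Gamma_op Y"
begin

abbreviation "XY \<equiv> Xof Y"
abbreviation "xiY \<equiv> xiof M P p1 p2 Y"
abbreviation "xi0Y \<equiv> xi0of M one Y"

lemma Yo: "fst Y n \<in> Obj M"
  using Yfun unfolding is_functor_def by auto

lemma Yh: "(m, n, g) \<in> Arr Gamma_op \<Longrightarrow> snd Y (m, n, g) \<in> hom M (fst Y m) (fst Y n)"
proof -
  assume a: "(m, n, g) \<in> Arr Gamma_op"
  have "\<forall>f\<in>Arr Gamma_op. snd Y f \<in> hom M (fst Y (Dom Gamma_op f)) (fst Y (Cod Gamma_op f))"
    using Yfun unfolding is_functor_def by blast
  from bspec[OF this a] show ?thesis by simp
qed

lemma Ycomp: "a \<in> Arr Gamma_op \<Longrightarrow> b \<in> Arr Gamma_op \<Longrightarrow> Cod Gamma_op a = Dom Gamma_op b \<Longrightarrow>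
   Comp M (snd Y b) (snd Y a) = snd Y (Comp Gamma_op b a)"
proof -
  assume a: "a \<in> Arr Gamma_op" "b \<in> Arr Gamma_op" "Cod Gamma_op a = Dom Gamma_op b"
  have "\<forall>f\<in>Arr Gamma_op. \<forall>g\<in>Arr Gamma_op. Cod Gamma_op f = Dom Gamma_op g \<longrightarrow>
        snd Y (Comp Gamma_op g f) = Comp M (snd Y g) (snd Y f)"
    using Yfun unfolding is_functor_def by blast
  then show ?thesis using a by simp
qed

lemma Yid: "snd Y (n, n, restrict id {..n}) = Ide M (fst Y n)"
proof -
  have "\<forall>a\<in>Obj Gamma_op. snd Y (Ide Gamma_op a) = Ide M (fst Y a)"
    using Yfun unfolding is_functor_def by blast
  then show ?thesis by simp
qed

lemma Yg1: "snd Y (gc1 A B) \<in> hom M (fst Y (A + B)) (fst Y A)"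
  using Yh gc1_arr[of A B] unfolding gc1_def by simp

lemma Yg2: "snd Y (gc2 A B) \<in> hom M (fst Y (A + B)) (fst Y B)"
  using Yh gc2_arr[of A B] unfolding gc2_def by simp

lemma xiY: "xiY A B \<in> hom M (fst Y (A + B)) (P (fst Y A) (fst Y B))"
  "Comp M (p1 (fst Y A) (fst Y B)) (xiY A B) = snd Y (gc1 A B)"
  "Comp M (p2 (fst Y A) (fst Y B)) (xiY A B) = snd Y (gc2 A B)"
  unfolding xiof_def using mpair[OF Yo Yo Yg1 Yg2] by auto

lemma xi0Y: "xi0Y \<in> hom M (fst Y 0) one"
proof -
  obtain t where "t \<in> hom M (fst Y 0) one" using term_ex[OF Yo] by blast
  then have "\<exists>!t. t \<in> hom M (fst Y 0) one" using term_unique by blast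
  from theI'[OF this] show ?thesis unfolding xi0of_def .
qed

lemma XYo: "fst XY = fst Y" by (simp add: Xof_def)

lemma XYa: "f \<in> Arr Phi \<Longrightarrow> snd XY f = snd Y (bplus f)" by (simp add: Xof_def)

lemma XYh: "(n, m, f) \<in> Arr Phi \<Longrightarrow> snd XY (n, m, f) \<in> hom M (fst Y n) (fst Y m)"
  using XYa Yh bplus_arr by (simp add: bplus_simp)

lemma XY_functor: "is_functor Phi M XY"
  unfolding is_functor_def
proof (intro conjI ballI impI)
  fix a show "fst XY a \<in> Obj M" using XYo Yo by simp
next
  fix f assume "f \<in> Arr Phi"
  then obtain n m f' where "f = (n, m, f')" "(n, m, f') \<in> Arr Phi" by (cases f) auto
  then show "snd XY f \<in> hom M (fst XY (Dom Phi f)) (fst XY (Cod Phi f))"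
    using XYh XYo by simp
next
  fix a show "snd XY (Ide Phi a) = Ide M (fst XY a)"
    using XYa[of "Ide Phi a"] bplus_id Yid XYo by simp
next
  fix f g assume "f \<in> Arr Phi" "g \<in> Arr Phi" "Cod Phi f = Dom Phi g"
  then obtain n m f' k g' where fg: "f = (n, m, f')" "g = (m, k, g')" "(n, m, f') \<in> Arr Phi" "(m, k, g') \<in> Arr Phi"
    by (cases f, cases g) auto
  have c: "(n, k, restrict (g' \<circ> f') {..<n}) \<in> Arr Phi" using fg(3,4) by (auto simp: PiE_def Pi_def)
  have "snd Y (bplus (n, k, restrict (g' \<circ> f') {..<n})) = Comp M (snd Y (bplus (m, k, g'))) (snd Y (bplus (n, m, f')))"
    using bplus_comp[OF fg(3,4)] Ycomp[OF bplus_arr[OF fg(3)] bplus_arr[OF fg(4)]] by (simp add: bplus_simp)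
  then show "snd XY (Comp Phi g f) = Comp M (snd XY g) (snd XY f)"
    using fg c XYa by simp
qed

lemma XY_ext: "ext_functor Phi XY"
  unfolding ext_functor_def by (simp add: Xof_def)

end


lemma bplus_arr': "f \<in> Arr Phi \<Longrightarrow> bplus f \<in> Arr Gamma_op"
  using bplus_arr by (cases f) auto

lemma dc_simps[simp]:
  "Dom Gamma_op (bplus F) = Dom Phi F" "Cod Gamma_op (bplus F) = Cod Phi F"
  "Dom Gamma_op (gc1 A B) = A + B" "Cod Gamma_op (gc1 A B) = A"
  "Dom Gamma_op (gc2 A B) = A + B" "Cod Gamma_op (gc2 A B) = B"
  "Dom Phi (phi_plus (A, A', f) (B, B', g)) = A + B" "Cod Phi (phi_plus (A, A', f) (B, B', g)) = A' + B'"
  "Dom Phi (phi_swap A B) = A + B" "Cod Phi (phi_swap A B) = B + A"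
  by (cases F; simp add: bplus_simp gc1_def gc2_def phi_plus_simp phi_swap_def)+

context gfun begin

lemma XYh': "f \<in> Arr Phi \<Longrightarrow> snd XY f \<in> hom M (fst Y (Dom Phi f)) (fst Y (Cod Phi f))"
  using XYh by (cases f) auto

lemma Ycomp': "a \<in> Arr Gamma_op \<Longrightarrow> b \<in> Arr Gamma_op \<Longrightarrow> Cod Gamma_op a = Dom Gamma_op b \<Longrightarrow>
   Comp M (snd Y b) (Comp M (snd Y a) k) = Comp M (snd Y (Comp Gamma_op b a)) k"
  if "k \<in> hom M z (fst Y (Dom Gamma_op a))"
proof -
  assume a: "a \<in> Arr Gamma_op" "b \<in> Arr Gamma_op" "Cod Gamma_op a = Dom Gamma_op b"
  obtain m n g where ag: "a = (m, n, g)" by (cases a)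
  obtain n' k' h where bh: "b = (n', k', h)" by (cases b)
  have ha: "snd Y a \<in> hom M (fst Y m) (fst Y n)" using Yh a ag by simp
  have hb: "snd Y b \<in> hom M (fst Y n) (fst Y k')" using Yh a bh ag by simp
  show ?thesis using assoc[OF _ ha hb, of k z] that ag Ycomp[OF a] by simp
qed

lemma G_nat:
  assumes f: "(A, A', f) \<in> Arr Phi" and g: "(B, B', g) \<in> Arr Phi"
  shows "Comp M (xiY A' B') (snd XY (phi_plus (A, A', f) (B, B', g))) =
         Comp M (mtens M P p1 p2 (snd XY (A, A', f)) (snd XY (B, B', g))) (xiY A B)"
proof -
  let ?pf = "phi_plus (A, A', f) (B, B', g)"
  have pf: "?pf \<in> Arr Phi" using phi_plus_arr[OF f g] .
  have hpf: "snd XY ?pf \<in> hom M (fst Y (A + B)) (fst Y (A' + B'))" using XYh'[OF pf] by simp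
  note T = mtens[OF XYh[OF f] XYh[OF g]]
  have hL: "Comp M (xiY A' B') (snd XY ?pf) \<in> hom M (fst Y (A + B)) (P (fst Y A') (fst Y B'))"
    using comp_hom[OF hpf xiY(1)] .
  have hR: "Comp M (mtens M P p1 p2 (snd XY (A, A', f)) (snd XY (B, B', g))) (xiY A B) \<in> hom M (fst Y (A + B)) (P (fst Y A') (fst Y B'))"
    using comp_hom[OF xiY(1) T(1)] .
  have ga: "gc1 A B \<in> Arr Gamma_op" "gc2 A B \<in> Arr Gamma_op" "gc1 A' B' \<in> Arr Gamma_op" "gc2 A' B' \<in> Arr Gamma_op"
    using gc1_arr gc2_arr by auto
  have "Comp M (p1 (fst Y A') (fst Y B')) (Comp M (xiY A' B') (snd XY ?pf))
      = Comp M (snd Y (gc1 A' B')) (snd Y (bplus ?pf))"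
    using p_k(1)[OF hpf xiY(1) Yo Yo] xiY(2) XYa[OF pf] by simp
  also have "\<dots> = snd Y (Comp Gamma_op (gc1 A' B') (bplus ?pf))"
    using Ycomp[OF bplus_arr'[OF pf] ga(3)] by simp
  also have "\<dots> = snd Y (Comp Gamma_op (bplus (A, A', f)) (gc1 A B))"
    using gamma_nat1[OF f g] by simp
  also have "\<dots> = Comp M (snd XY (A, A', f)) (snd Y (gc1 A B))"
    using Ycomp[OF ga(1) bplus_arr'[OF f]] XYa[OF f] by simp
  also have "\<dots> = Comp M (p1 (fst Y A') (fst Y B')) (Comp M (mtens M P p1 p2 (snd XY (A, A', f)) (snd XY (B, B', g))) (xiY A B))"
    using tens_p1_k[OF xiY(1) XYh[OF f] XYh[OF g]] xiY(2) by simp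
  finally have e1: "Comp M (p1 (fst Y A') (fst Y B')) (Comp M (xiY A' B') (snd XY ?pf)) =
     Comp M (p1 (fst Y A') (fst Y B')) (Comp M (mtens M P p1 p2 (snd XY (A, A', f)) (snd XY (B, B', g))) (xiY A B))" .
  have "Comp M (p2 (fst Y A') (fst Y B')) (Comp M (xiY A' B') (snd XY ?pf))
      = Comp M (snd Y (gc2 A' B')) (snd Y (bplus ?pf))"
    using p_k(2)[OF hpf xiY(1) Yo Yo] xiY(3) XYa[OF pf] by simp
  also have "\<dots> = snd Y (Comp Gamma_op (gc2 A' B') (bplus ?pf))"
    using Ycomp[OF bplus_arr'[OF pf] ga(4)] by simp
  also have "\<dots> = snd Y (Comp Gamma_op (bplus (B, B', g)) (gc2 A B))"
    using gamma_nat2[OF f g] by simp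
  also have "\<dots> = Comp M (snd XY (B, B', g)) (snd Y (gc2 A B))"
    using Ycomp[OF ga(2) bplus_arr'[OF g]] XYa[OF g] by simp
  also have "\<dots> = Comp M (p2 (fst Y A') (fst Y B')) (Comp M (mtens M P p1 p2 (snd XY (A, A', f)) (snd XY (B, B', g))) (xiY A B))"
    using tens_p2_k[OF xiY(1) XYh[OF f] XYh[OF g]] xiY(3) by simp
  finally have e2: "Comp M (p2 (fst Y A') (fst Y B')) (Comp M (xiY A' B') (snd XY ?pf)) =
     Comp M (p2 (fst Y A') (fst Y B')) (Comp M (mtens M P p1 p2 (snd XY (A, A', f)) (snd XY (B, B', g))) (xiY A B))" .
  show ?thesis using prod_ext[OF Yo Yo hL hR e1 e2] .
qed

lemma G_coassoc:
  "Comp M (massoc M P p1 p2 (fst Y A) (fst Y B) (fst Y C))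
      (Comp M (mtens M P p1 p2 (xiY A B) (Ide M (fst Y C))) (xiY (A + B) C)) =
   Comp M (mtens M P p1 p2 (Ide M (fst Y A)) (xiY B C)) (xiY A (B + C))"
proof -
  let ?a = "fst Y A" and ?b = "fst Y B" and ?c = "fst Y C"
  let ?x1 = "xiY (A + B) C"
  let ?T = "mtens M P p1 p2 (xiY A B) (Ide M ?c)"
  let ?x21 = "Comp M ?T ?x1"
  let ?y1 = "xiY A (B + C)"
  let ?S = "mtens M P p1 p2 (Ide M ?a) (xiY B C)"
  have e3: "A + (B + C) = A + B + C" by simp
  have hx1: "?x1 \<in> hom M (fst Y (A + B + C)) (P (fst Y (A + B)) ?c)" using xiY(1) .
  note T = mtens[OF xiY(1)[of A B] ide_hom[OF Yo[of C]]]
  have hx21: "?x21 \<in> hom M (fst Y (A + B + C)) (P (P ?a ?b) ?c)" using comp_hom[OF hx1 T(1)] .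
  note As = massoc[OF Yo Yo Yo, of A B C]
  have hL: "Comp M (massoc M P p1 p2 ?a ?b ?c) ?x21 \<in> hom M (fst Y (A + B + C)) (P ?a (P ?b ?c))"
    using comp_hom[OF hx21 As(1)] .
  have hy1: "?y1 \<in> hom M (fst Y (A + B + C)) (P ?a (fst Y (B + C)))" using xiY(1)[of A "B + C"] e3 by simp
  note S = mtens[OF ide_hom[OF Yo[of A]] xiY(1)[of B C]]
  have hR: "Comp M ?S ?y1 \<in> hom M (fst Y (A + B + C)) (P ?a (P ?b ?c))" using comp_hom[OF hy1 S(1)] .
  have ob: "P ?b ?c \<in> Obj M" using P_obj Yo by auto
  have g1: "gc1 (A + B) C \<in> Arr Gamma_op" "gc1 A B \<in> Arr Gamma_op" "gc2 A B \<in> Arr Gamma_op"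
    "gc1 B C \<in> Arr Gamma_op" "gc2 B C \<in> Arr Gamma_op" "gc2 A (B + C) \<in> Arr Gamma_op" "gc2 (A + B) C \<in> Arr Gamma_op"
    using gc1_arr gc2_arr by auto
  have hp2y1: "Comp M (p2 ?a (fst Y (B + C))) ?y1 \<in> hom M (fst Y (A + B + C)) (fst Y (B + C))"
    using comp_hom[OF hy1 p2_hom[OF Yo Yo]] .
  have "Comp M (p1 ?a (P ?b ?c)) (Comp M (massoc M P p1 p2 ?a ?b ?c) ?x21)
      = Comp M (p1 ?a ?b) (Comp M (p1 (P ?a ?b) ?c) ?x21)"
    using massoc_k(1)[OF hx21 Yo Yo Yo] .
  also have "\<dots> = Comp M (p1 ?a ?b) (Comp M (xiY A B) (Comp M (p1 (fst Y (A + B)) ?c) ?x1))"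
    using tens_p1_k[OF hx1 xiY(1)[of A B] ide_hom[OF Yo[of C]]] by simp
  also have "\<dots> = Comp M (snd Y (gc1 A B)) (snd Y (gc1 (A + B) C))"
    using p_k(1)[OF comp_hom[OF hx1 p1_hom[OF Yo Yo]] xiY(1)[of A B] Yo Yo] xiY(2) by simp
  also have "\<dots> = snd Y (gc1 A (B + C))"
    using Ycomp[OF g1(1) g1(2)] gamma_c1 by simp
  also have "\<dots> = Comp M (p1 ?a (P ?b ?c)) (Comp M ?S ?y1)"
    using tens_p1_k[OF hy1 ide_hom[OF Yo[of A]] xiY(1)[of B C]] idl[OF comp_hom[OF hy1 p1_hom[OF Yo Yo]]] xiY(2) by simp
  finally have e1: "Comp M (p1 ?a (P ?b ?c)) (Comp M (massoc M P p1 p2 ?a ?b ?c) ?x21) = Comp M (p1 ?a (P ?b ?c)) (Comp M ?S ?y1)" .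
  have hL2: "Comp M (p2 ?a (P ?b ?c)) (Comp M (massoc M P p1 p2 ?a ?b ?c) ?x21) \<in> hom M (fst Y (A + B + C)) (P ?b ?c)"
    using comp_hom[OF hL p2_hom[OF Yo ob]] .
  have hR2: "Comp M (p2 ?a (P ?b ?c)) (Comp M ?S ?y1) \<in> hom M (fst Y (A + B + C)) (P ?b ?c)"
    using comp_hom[OF hR p2_hom[OF Yo ob]] .
  have "Comp M (p1 ?b ?c) (Comp M (p2 ?a (P ?b ?c)) (Comp M (massoc M P p1 p2 ?a ?b ?c) ?x21))
     = Comp M (p2 ?a ?b) (Comp M (p1 (P ?a ?b) ?c) ?x21)"
    using massoc_k(2)[OF hx21 Yo Yo Yo] .
  also have "\<dots> = Comp M (p2 ?a ?b) (Comp M (xiY A B) (Comp M (p1 (fst Y (A + B)) ?c) ?x1))"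
    using tens_p1_k[OF hx1 xiY(1)[of A B] ide_hom[OF Yo[of C]]] by simp
  also have "\<dots> = Comp M (snd Y (gc2 A B)) (snd Y (gc1 (A + B) C))"
    using p_k(2)[OF comp_hom[OF hx1 p1_hom[OF Yo Yo]] xiY(1)[of A B] Yo Yo] xiY(2,3) by simp
  also have "\<dots> = snd Y (Comp Gamma_op (gc1 B C) (gc2 A (B + C)))"
    using Ycomp[OF g1(1) g1(3)] gamma_c2 by simp
  also have "\<dots> = Comp M (snd Y (gc1 B C)) (Comp M (p2 ?a (fst Y (B + C))) ?y1)"
    using Ycomp[OF g1(6) g1(4)] xiY(3) by simp
  also have "\<dots> = Comp M (p1 ?b ?c) (Comp M (xiY B C) (Comp M (p2 ?a (fst Y (B + C))) ?y1))"
    using p_k(1)[OF hp2y1 xiY(1)[of B C] Yo Yo] xiY(2) by simp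
  also have "\<dots> = Comp M (p1 ?b ?c) (Comp M (p2 ?a (P ?b ?c)) (Comp M ?S ?y1))"
    using tens_p2_k[OF hy1 ide_hom[OF Yo[of A]] xiY(1)[of B C]] by simp
  finally have e21: "Comp M (p1 ?b ?c) (Comp M (p2 ?a (P ?b ?c)) (Comp M (massoc M P p1 p2 ?a ?b ?c) ?x21))
     = Comp M (p1 ?b ?c) (Comp M (p2 ?a (P ?b ?c)) (Comp M ?S ?y1))" .
  have "Comp M (p2 ?b ?c) (Comp M (p2 ?a (P ?b ?c)) (Comp M (massoc M P p1 p2 ?a ?b ?c) ?x21))
     = Comp M (p2 (P ?a ?b) ?c) ?x21"
    using massoc_k(3)[OF hx21 Yo Yo Yo] .
  also have "\<dots> = Comp M (Ide M ?c) (Comp M (p2 (fst Y (A + B)) ?c) ?x1)"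
    using tens_p2_k[OF hx1 xiY(1)[of A B] ide_hom[OF Yo[of C]]] by simp
  also have "\<dots> = snd Y (gc2 (A + B) C)"
    using xiY(3) idl[OF Yg2] by simp
  also have "\<dots> = snd Y (Comp Gamma_op (gc2 B C) (gc2 A (B + C)))"
    using gamma_c3 by simp
  also have "\<dots> = Comp M (snd Y (gc2 B C)) (Comp M (p2 ?a (fst Y (B + C))) ?y1)"
    using Ycomp[OF g1(6) g1(5)] xiY(3) by simp
  also have "\<dots> = Comp M (p2 ?b ?c) (Comp M (xiY B C) (Comp M (p2 ?a (fst Y (B + C))) ?y1))"
    using p_k(2)[OF hp2y1 xiY(1)[of B C] Yo Yo] xiY(3) by simp
  also have "\<dots> = Comp M (p2 ?b ?c) (Comp M (p2 ?a (P ?b ?c)) (Comp M ?S ?y1))"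
    using tens_p2_k[OF hy1 ide_hom[OF Yo[of A]] xiY(1)[of B C]] by simp
  finally have e22: "Comp M (p2 ?b ?c) (Comp M (p2 ?a (P ?b ?c)) (Comp M (massoc M P p1 p2 ?a ?b ?c) ?x21))
     = Comp M (p2 ?b ?c) (Comp M (p2 ?a (P ?b ?c)) (Comp M ?S ?y1))" .
  have e2: "Comp M (p2 ?a (P ?b ?c)) (Comp M (massoc M P p1 p2 ?a ?b ?c) ?x21) = Comp M (p2 ?a (P ?b ?c)) (Comp M ?S ?y1)"
    using prod_ext[OF Yo Yo hL2 hR2 e21 e22] .
  show ?thesis using prod_ext[OF Yo ob hL hR e1 e2] by simp
qed

lemma G_unitl: "Comp M (p2 one (fst Y A)) (Comp M (mtens M P p1 p2 xi0Y (Ide M (fst Y A))) (xiY 0 A)) = Ide M (fst Y A)"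
proof -
  have "Comp M (p2 one (fst Y A)) (Comp M (mtens M P p1 p2 xi0Y (Ide M (fst Y A))) (xiY 0 A))
     = Comp M (Ide M (fst Y A)) (Comp M (p2 (fst Y 0) (fst Y A)) (xiY 0 A))"
    using tens_p2_k[OF xiY(1)[of 0 A] xi0Y ide_hom[OF Yo[of A]]] by simp
  also have "\<dots> = snd Y (gc2 0 A)" using xiY(3) idl[OF Yg2[of 0 A]] by simp
  also have "\<dots> = Ide M (fst Y A)" using gamma_u1 Yid by simp
  finally show ?thesis .
qed

lemma G_unitr: "Comp M (p1 (fst Y A) one) (Comp M (mtens M P p1 p2 (Ide M (fst Y A)) xi0Y) (xiY A 0)) = Ide M (fst Y A)"
proof -
  have "Comp M (p1 (fst Y A) one) (Comp M (mtens M P p1 p2 (Ide M (fst Y A)) xi0Y) (xiY A 0))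
     = Comp M (Ide M (fst Y A)) (Comp M (p1 (fst Y A) (fst Y 0)) (xiY A 0))"
    using tens_p1_k[OF xiY(1)[of A 0] ide_hom[OF Yo[of A]] xi0Y] by simp
  also have "\<dots> = snd Y (gc1 A 0)" using xiY(2) idl[OF Yg1[of A 0]] by simp
  also have "\<dots> = Ide M (fst Y A)" using gamma_u2 Yid by simp
  finally show ?thesis .
qed

lemma G_sym: "Comp M (msym M P p1 p2 (fst Y A) (fst Y B)) (xiY A B) = Comp M (xiY B A) (snd XY (phi_swap A B))"
proof -
  have sw: "phi_swap A B \<in> Arr Phi" using phi_swap_arr .
  have hs: "snd XY (phi_swap A B) \<in> hom M (fst Y (A + B)) (fst Y (B + A))" using XYh'[OF sw] by simp
  have hL: "Comp M (msym M P p1 p2 (fst Y A) (fst Y B)) (xiY A B) \<in> hom M (fst Y (A + B)) (P (fst Y B) (fst Y A))"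
    using comp_hom[OF xiY(1) msym(1)[OF Yo Yo]] .
  have hR: "Comp M (xiY B A) (snd XY (phi_swap A B)) \<in> hom M (fst Y (A + B)) (P (fst Y B) (fst Y A))"
    using comp_hom[OF hs xiY(1)] .
  have ga: "gc1 B A \<in> Arr Gamma_op" "gc2 B A \<in> Arr Gamma_op" using gc1_arr gc2_arr by auto
  have "Comp M (p1 (fst Y B) (fst Y A)) (Comp M (msym M P p1 p2 (fst Y A) (fst Y B)) (xiY A B)) = snd Y (gc2 A B)"
    using msym_k(1)[OF xiY(1) Yo Yo] xiY(3) by simp
  also have "\<dots> = snd Y (Comp Gamma_op (gc1 B A) (bplus (phi_swap A B)))" using gamma_s1 by simp
  also have "\<dots> = Comp M (p1 (fst Y B) (fst Y A)) (Comp M (xiY B A) (snd XY (phi_swap A B)))"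
    using Ycomp[OF bplus_arr'[OF sw] ga(1)] p_k(1)[OF hs xiY(1) Yo Yo] xiY(2) XYa[OF sw] by simp
  finally have e1: "Comp M (p1 (fst Y B) (fst Y A)) (Comp M (msym M P p1 p2 (fst Y A) (fst Y B)) (xiY A B)) =
     Comp M (p1 (fst Y B) (fst Y A)) (Comp M (xiY B A) (snd XY (phi_swap A B)))" .
  have "Comp M (p2 (fst Y B) (fst Y A)) (Comp M (msym M P p1 p2 (fst Y A) (fst Y B)) (xiY A B)) = snd Y (gc1 A B)"
    using msym_k(2)[OF xiY(1) Yo Yo] xiY(2) by simp
  also have "\<dots> = snd Y (Comp Gamma_op (gc2 B A) (bplus (phi_swap A B)))" using gamma_s2 by simp
  also have "\<dots> = Comp M (p2 (fst Y B) (fst Y A)) (Comp M (xiY B A) (snd XY (phi_swap A B)))"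
    using Ycomp[OF bplus_arr'[OF sw] ga(2)] p_k(2)[OF hs xiY(1) Yo Yo] xiY(3) XYa[OF sw] by simp
  finally have e2: "Comp M (p2 (fst Y B) (fst Y A)) (Comp M (msym M P p1 p2 (fst Y A) (fst Y B)) (xiY A B)) =
     Comp M (p2 (fst Y B) (fst Y A)) (Comp M (xiY B A) (snd XY (phi_swap A B)))" .
  show ?thesis using prod_ext[OF Yo Yo hL hR e1 e2] .
qed

lemma G_scolax: "scolax_obj M one P p1 p2 (Gof M one P p1 p2 Y)"
  unfolding scolax_obj_def Gof_def prod.case
proof (intro conjI allI ballI)
  show "is_functor Phi M XY" by (rule XY_functor)
  show "ext_functor Phi XY" by (rule XY_ext)
  fix A B show "xiY A B \<in> hom M (fst XY (A + B)) (P (fst XY A) (fst XY B))" using xiY(1) XYo by simp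
next
  show "xi0Y \<in> hom M (fst XY 0) one" using xi0Y XYo by simp
next
  fix f g assume f: "f \<in> Arr Phi" and g: "g \<in> Arr Phi"
  obtain A A' f' where ff: "f = (A, A', f')" by (cases f)
  obtain B B' g' where gg: "g = (B, B', g')" by (cases g)
  show "Comp M (xiY (Cod Phi f) (Cod Phi g)) (snd XY (phi_plus f g)) =
        Comp M (mtens M P p1 p2 (snd XY f) (snd XY g)) (xiY (Dom Phi f) (Dom Phi g))"
    using G_nat f g ff gg by simp
next
  fix A B C show "Comp M (massoc M P p1 p2 (fst XY A) (fst XY B) (fst XY C))
           (Comp M (mtens M P p1 p2 (xiY A B) (Ide M (fst XY C))) (xiY (A + B) C)) =
         Comp M (mtens M P p1 p2 (Ide M (fst XY A)) (xiY B C)) (xiY A (B + C))"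
    using G_coassoc XYo by simp
next
  fix A show "Comp M (p2 one (fst XY A)) (Comp M (mtens M P p1 p2 xi0Y (Ide M (fst XY A))) (xiY 0 A)) = Ide M (fst XY A)"
    using G_unitl XYo by simp
next
  fix A show "Comp M (p1 (fst XY A) one) (Comp M (mtens M P p1 p2 (Ide M (fst XY A)) xi0Y) (xiY A 0)) = Ide M (fst XY A)"
    using G_unitr XYo by simp
next
  fix A B show "Comp M (msym M P p1 p2 (fst XY A) (fst XY B)) (xiY A B) = Comp M (xiY B A) (snd XY (phi_swap A B))"
    using G_sym XYo by simp
qed

end


context cprod begin

lemma mk_colax: "scolax_obj M one P p1 p2 (X, \<xi>, \<xi>0) \<Longrightarrow> colax M one P p1 p2 X \<xi> \<xi>0"
  unfolding colax_def colax_axioms_def using cprod_axioms by simp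

lemma mk_gfun: "is_functor Gamma_op M Y \<Longrightarrow> ext_functor Gamma_op Y \<Longrightarrow> gfun M one P p1 p2 Y"
  unfolding gfun_def gfun_axioms_def using cprod_axioms by simp

lemma mpair_unique:
  assumes "a \<in> Obj M" "b \<in> Obj M" "h \<in> hom M c (P a b)"
  shows "mpair M P p1 p2 c a b (Comp M (p1 a b) h) (Comp M (p2 a b) h) = h"
proof -
  have f: "Comp M (p1 a b) h \<in> hom M c a" "Comp M (p2 a b) h \<in> hom M c b"
    using comp_hom[OF assms(3)] p1_hom p2_hom assms by blast+
  note Mp = mpair[OF assms(1,2) f]
  show ?thesis using prod_ext[OF assms(1,2) Mp(1) assms(3)] Mp(2,3) by simp
qed

end

context colax begin

lemma Ya': "g \<in> Arr Gamma_op \<Longrightarrow> snd Y g = Comp M (pi1 (Cod Gamma_op g) 1) (snd X (betac g))"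
  by (cases g) (simp add: Yof_def)

lemma Xcomp': "f \<in> Arr Phi \<Longrightarrow> g \<in> Arr Phi \<Longrightarrow> Cod Phi f = Dom Phi g \<Longrightarrow>
   snd X (Comp Phi g f) = Comp M (snd X g) (snd X f)"
  using Xfun unfolding is_functor_def by blast

lemma Xa': "f \<in> Arr Phi \<Longrightarrow> snd X f \<in> hom M (fst X (Dom Phi f)) (fst X (Cod Phi f))"
  using Xa by (cases f) auto

lemma rt_X: "Xof Y = X"
proof -
  have "snd (Xof Y) f = snd X f" for f
  proof (cases "f \<in> Arr Phi")
    case False
    have u: "snd X f = undefined" using Xext False unfolding ext_functor_def by blast
    show ?thesis using False by (simp add: Xof_def u)
  next
    case True
    obtain n m f' where ff: "f = (n, m, f')" by (cases f)
    have a: "(n, m, f') \<in> Arr Phi" using True ff by simp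
    have e0: "(0::nat, 1::nat, \<lambda>i\<in>{..<0::nat}. 0::nat) \<in> Arr Phi" by (simp add: restrict_def PiE_def extensional_def)
    have "snd (Xof Y) f = snd Y (bplus (n, m, f'))" using True ff by (simp add: Xof_def)
    also have "\<dots> = Comp M (pi1 m 1) (snd X (phi_plus (n, m, f') (0, 1, \<lambda>i\<in>{..<0}. 0)))"
      using Ya'[OF bplus_arr[OF a]] rt_bplus[OF a] by simp
    also have "\<dots> = Comp M (snd X (n, m, f')) (pi1 n 0)"
      using pi1_nat[OF a e0] by simp
    also have "\<dots> = snd X f" using pi1_unit idr[OF Xa[OF a]] ff by simp
    finally show ?thesis .
  qed
  then show ?thesis by (simp add: prod_eq_iff fun_eq_iff Xof_def Yof_def)
qed

lemma rt_xi: "xiof M P p1 p2 Y = \<xi>"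
proof (intro ext)
  fix A B
  have g1: "snd Y (gc1 A B) = pi1 A B"
  proof -
    have a1: "(A, A, restrict id {..<A}) \<in> Arr Phi" by simp
    have a2: "(B, 1::nat, \<lambda>i\<in>{..<B}. 0::nat) \<in> Arr Phi" by simp
    have "snd Y (gc1 A B) = Comp M (pi1 A 1) (snd X (phi_plus (A, A, restrict id {..<A}) (B, 1, \<lambda>i\<in>{..<B}. 0)))"
      using Ya'[OF gc1_arr] rt_gc1 by simp
    also have "\<dots> = Comp M (Ide M (fst X A)) (pi1 A B)" using pi1_nat[OF a1 a2] Xid by simp
    also have "\<dots> = pi1 A B" using idl[OF pi1_hom] .
    finally show ?thesis .
  qed
  have g2: "snd Y (gc2 A B) = pi2 A B"
  proof -
    have a1: "(B, B, restrict id {..<B}) \<in> Arr Phi" by simp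
    have a2: "(A, 1::nat, \<lambda>i\<in>{..<A}. 0::nat) \<in> Arr Phi" by simp
    have pp: "phi_plus (B, B, restrict id {..<B}) (A, 1, \<lambda>i\<in>{..<A}. 0) \<in> Arr Phi" using phi_plus_arr[OF a1 a2] .
    have hp: "snd X (phi_plus (B, B, restrict id {..<B}) (A, 1, \<lambda>i\<in>{..<A}. 0)) \<in> hom M (fst X (B + A)) (fst X (B + 1))"
      using Xa'[OF pp] by simp
    have hs: "snd X (phi_swap A B) \<in> hom M (fst X (A + B)) (fst X (B + A))" using Xa'[OF phi_swap_arr] by simp
    have "snd Y (gc2 A B) = Comp M (pi1 B 1) (snd X (Comp Phi (phi_plus (B, B, restrict id {..<B}) (A, 1, \<lambda>i\<in>{..<A}. 0)) (phi_swap A B)))"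
      using Ya'[OF gc2_arr] rt_gc2 by simp
    also have "\<dots> = Comp M (pi1 B 1) (Comp M (snd X (phi_plus (B, B, restrict id {..<B}) (A, 1, \<lambda>i\<in>{..<A}. 0))) (snd X (phi_swap A B)))"
      using Xcomp'[OF phi_swap_arr pp] by simp
    also have "\<dots> = Comp M (Comp M (pi1 B 1) (snd X (phi_plus (B, B, restrict id {..<B}) (A, 1, \<lambda>i\<in>{..<A}. 0)))) (snd X (phi_swap A B))"
      using assoc[OF hs hp pi1_hom] by simp
    also have "\<dots> = Comp M (Comp M (Ide M (fst X B)) (pi1 B A)) (snd X (phi_swap A B))"
      using pi1_nat[OF a1 a2] Xid by simp
    also have "\<dots> = pi2 A B" using idl[OF pi1_hom] pi2_sym by simp
    finally show ?thesis .
  qed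
  show "xiof M P p1 p2 Y A B = \<xi> A B"
    using mpair_unique[OF Xo Xo xi_hom[of A B]] g1 g2 Yo unfolding xiof_def cpi1_def by simp
qed

lemma rt_xi0: "xi0of M one Y = \<xi>0"
  unfolding xi0of_def Yo using xi0_hom term_unique by blast

lemma rt_colax: "Gof M one P p1 p2 Y = (X, \<xi>, \<xi>0)"
  unfolding Gof_def using rt_X rt_xi rt_xi0 by simp

end

context gfun begin

lemma rt_Y: "Yof M p1 (Gof M one P p1 p2 Y) = Y"
proof -
  have "snd (Yof M p1 (Gof M one P p1 p2 Y)) g = snd Y g" for g
  proof (cases "g \<in> Arr Gamma_op")
    case False
    have u: "snd Y g = undefined" using Yext False unfolding ext_functor_def by blast
    show ?thesis using False by (simp add: Yof_def Gof_def u)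
  next
    case True
    obtain m n g' where gg: "g = (m, n, g')" by (cases g)
    have a: "(m, n, g') \<in> Arr Gamma_op" using True gg by simp
    have b: "betac (m, n, g') \<in> Arr Phi" using betac_arr[OF a] .
    have "snd (Yof M p1 (Gof M one P p1 p2 Y)) g =
        Comp M (Comp M (p1 (fst Y n) (fst Y 1)) (xiY n 1)) (snd XY (betac (m, n, g')))"
      using True gg by (simp add: Yof_def Gof_def cpi1_def XYo)
    also have "\<dots> = Comp M (snd Y (gc1 n 1)) (snd Y (bplus (betac (m, n, g'))))"
      using xiY(2) XYa[OF b] by simp
    also have "\<dots> = snd Y (Comp Gamma_op (gc1 n 1) (bplus (betac (m, n, g'))))"
      by (rule Ycomp[OF bplus_arr'[OF b] gc1_arr]) (simp add: betac_simp)
    also have "\<dots> = snd Y g" using rt_gamma[OF a] gg by simp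
    finally show ?thesis .
  qed
  then show ?thesis by (simp add: prod_eq_iff fun_eq_iff Yof_def Gof_def Xof_def)
qed

end


lemma scolax_simps:
  "W \<in> Obj (scolax_cat M one P p1 p2) \<longleftrightarrow> scolax_obj M one P p1 p2 W"
  "(W, V, \<sigma>) \<in> Arr (scolax_cat M one P p1 p2) \<longleftrightarrow> scolax_obj M one P p1 p2 W \<and> scolax_obj M one P p1 p2 V \<and> monoidal_trans M P p1 p2 W V \<sigma>"
  "Dom (scolax_cat M one P p1 p2) (W, V, \<sigma>) = W"
  "Cod (scolax_cat M one P p1 p2) (W, V, \<sigma>) = V"
  "Ide (scolax_cat M one P p1 p2) W = (W, W, \<lambda>n. Ide M (fst (fst W) n))"
  "Comp (scolax_cat M one P p1 p2) (V', U, \<tau>) (W, V, \<sigma>) = (W, U, \<lambda>n. Comp M (\<tau> n) (\<sigma> n))"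
  by (simp_all add: scolax_cat_def)

lemma funcat_simps:
  "F \<in> Obj (funcat C D) \<longleftrightarrow> is_functor C D F \<and> ext_functor C F"
  "(F, G, \<sigma>) \<in> Arr (funcat C D) \<longleftrightarrow> is_functor C D F \<and> ext_functor C F \<and> is_functor C D G \<and> ext_functor C G \<and> nat_trans C D F G \<sigma>"
  "Dom (funcat C D) (F, G, \<sigma>) = F"
  "Cod (funcat C D) (F, G, \<sigma>) = G"
  "Ide (funcat C D) F = (F, F, \<lambda>a. if a \<in> Obj C then Ide D (fst F a) else undefined)"
  "Comp (funcat C D) (G', H, \<tau>) (F, G, \<sigma>) = (F, H, \<lambda>a. if a \<in> Obj C then Comp D (\<tau> a) (\<sigma> a) else undefined)"
  by (simp_all add: funcat_def)

lemma Yof_fst: "fst (Yof M p W) = fst (fst W)"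
  by (cases W) (simp add: Yof_def)

lemma Gof_fst: "fst (fst (Gof M one P p1 p2 Y)) = fst Y"
  by (simp add: Gof_def Xof_def)

context cprod begin

lemma F_nat:
  assumes W: "scolax_obj M one P p1 p2 (X, \<xi>, \<xi>0)" and V: "scolax_obj M one P p1 p2 (X2, \<xi>2, \<xi>02)"
    and mt: "monoidal_trans M P p1 p2 (X, \<xi>, \<xi>0) (X2, \<xi>2, \<xi>02) \<sigma>"
  shows "nat_trans Gamma_op M (Yof M p1 (X, \<xi>, \<xi>0)) (Yof M p1 (X2, \<xi>2, \<xi>02)) \<sigma>"
proof -
  interpret A: colax M one P p1 p2 X \<xi> \<xi>0 using mk_colax[OF W] .
  interpret B: colax M one P p1 p2 X2 \<xi>2 \<xi>02 using mk_colax[OF V] .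
  have nt: "nat_trans Phi M X X2 \<sigma>" and mono: "\<And>A B. Comp M (\<xi>2 A B) (\<sigma> (A + B)) = Comp M (mtens M P p1 p2 (\<sigma> A) (\<sigma> B)) (\<xi> A B)"
    using mt unfolding monoidal_trans_def by auto
  have sh: "\<And>a. \<sigma> a \<in> hom M (fst X a) (fst X2 a)" using nt unfolding nat_trans_def by auto
  have sn: "\<And>f. f \<in> Arr Phi \<Longrightarrow> Comp M (snd X2 f) (\<sigma> (Dom Phi f)) = Comp M (\<sigma> (Cod Phi f)) (snd X f)"
    using nt unfolding nat_trans_def by auto
  have key: "Comp M (B.pi1 n 1) (\<sigma> (Suc n)) = Comp M (\<sigma> n) (A.pi1 n 1)" for n
  proof -
    have s1: "\<sigma> (n + 1) \<in> hom M (fst X (n + 1)) (fst X2 (n + 1))" using sh .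
    have "Comp M (B.pi1 n 1) (\<sigma> (Suc n)) = Comp M (p1 (fst X2 n) (fst X2 1)) (Comp M (\<xi>2 n 1) (\<sigma> (n + 1)))"
      using assoc[OF s1 B.xi_hom p1_hom[OF B.Xo B.Xo]] unfolding cpi1_def by simp
    also have "\<dots> = Comp M (\<sigma> n) (A.pi1 n 1)"
      using mono[of n 1] tens_p1_k[OF A.xi_hom sh sh, of n 1] unfolding cpi1_def by simp
    finally show ?thesis .
  qed
  show ?thesis unfolding nat_trans_def
  proof (intro conjI ballI allI impI)
    fix a show "\<sigma> a \<in> hom M (fst (Yof M p1 (X, \<xi>, \<xi>0)) a) (fst (Yof M p1 (X2, \<xi>2, \<xi>02)) a)"
      using sh A.Yo B.Yo by simp
  next
    fix a :: nat assume "a \<notin> Obj Gamma_op" then show "\<sigma> a = undefined" by simp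
  next
    fix g assume g: "g \<in> Arr Gamma_op"
    obtain m n g' where gg: "g = (m, n, g')" by (cases g)
    have a: "(m, n, g') \<in> Arr Gamma_op" using g gg by simp
    have b: "betac (m, n, g') \<in> Arr Phi" using betac_arr[OF a] .
    have hXb: "snd X (betac (m, n, g')) \<in> hom M (fst X m) (fst X (Suc n))" using A.Xbetac[OF a] by simp
    have hX2b: "snd X2 (betac (m, n, g')) \<in> hom M (fst X2 m) (fst X2 (Suc n))" using B.Xbetac[OF a] by simp
    have hBp: "B.pi1 n 1 \<in> hom M (fst X2 (Suc n)) (fst X2 n)" using B.pi1_hom[of n 1] by simp
    have hAp: "A.pi1 n 1 \<in> hom M (fst X (Suc n)) (fst X n)" using A.pi1_hom[of n 1] by simp
    have nb: "Comp M (snd X2 (betac (m, n, g'))) (\<sigma> m) = Comp M (\<sigma> (Suc n)) (snd X (betac (m, n, g')))"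
      using sn[OF b] by (simp add: betac_simp)
    have "Comp M (snd (Yof M p1 (X2, \<xi>2, \<xi>02)) g) (\<sigma> (Dom Gamma_op g))
        = Comp M (Comp M (B.pi1 n 1) (snd X2 (betac (m, n, g')))) (\<sigma> m)"
      using B.Ya[OF a] gg by simp
    also have "\<dots> = Comp M (B.pi1 n 1) (Comp M (\<sigma> (Suc n)) (snd X (betac (m, n, g'))))"
      using assoc[OF sh hX2b hBp] nb by simp
    also have "\<dots> = Comp M (Comp M (\<sigma> n) (A.pi1 n 1)) (snd X (betac (m, n, g')))"
      using assoc[OF hXb sh hBp] key by simp
    also have "\<dots> = Comp M (\<sigma> n) (Comp M (A.pi1 n 1) (snd X (betac (m, n, g'))))"
      using assoc[OF hXb hAp sh] by simp
    also have "\<dots> = Comp M (\<sigma> (Cod Gamma_op g)) (snd (Yof M p1 (X, \<xi>, \<xi>0)) g)"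
      using A.Ya[OF a] gg by simp
    finally show "Comp M (snd (Yof M p1 (X2, \<xi>2, \<xi>02)) g) (\<sigma> (Dom Gamma_op g)) =
                  Comp M (\<sigma> (Cod Gamma_op g)) (snd (Yof M p1 (X, \<xi>, \<xi>0)) g)" .
  qed
qed

lemma G_mono:
  assumes Y: "is_functor Gamma_op M Y" "ext_functor Gamma_op Y"
    and Y2: "is_functor Gamma_op M Y2" "ext_functor Gamma_op Y2"
    and nt: "nat_trans Gamma_op M Y Y2 \<sigma>"
  shows "monoidal_trans M P p1 p2 (Gof M one P p1 p2 Y) (Gof M one P p1 p2 Y2) \<sigma>"
proof -
  interpret A: gfun M one P p1 p2 Y using mk_gfun[OF Y] .
  interpret B: gfun M one P p1 p2 Y2 using mk_gfun[OF Y2] .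
  have sh: "\<And>a. \<sigma> a \<in> hom M (fst Y a) (fst Y2 a)" using nt unfolding nat_trans_def by auto
  have sn: "\<And>f. f \<in> Arr Gamma_op \<Longrightarrow> Comp M (snd Y2 f) (\<sigma> (Dom Gamma_op f)) = Comp M (\<sigma> (Cod Gamma_op f)) (snd Y f)"
    using nt unfolding nat_trans_def by auto
  have nP: "nat_trans Phi M (Xof Y) (Xof Y2) \<sigma>"
    unfolding nat_trans_def
  proof (intro conjI ballI allI impI)
    fix a show "\<sigma> a \<in> hom M (fst (Xof Y) a) (fst (Xof Y2) a)" using sh A.XYo B.XYo by simp
  next
    fix a :: nat assume "a \<notin> Obj Phi" then show "\<sigma> a = undefined" by simp
  next
    fix f assume f: "f \<in> Arr Phi"
    show "Comp M (snd (Xof Y2) f) (\<sigma> (Dom Phi f)) = Comp M (\<sigma> (Cod Phi f)) (snd (Xof Y) f)"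
      using sn[OF bplus_arr'[OF f]] A.XYa[OF f] B.XYa[OF f] by simp
  qed
  have mono: "Comp M (B.xiY A B) (\<sigma> (A + B)) = Comp M (mtens M P p1 p2 (\<sigma> A) (\<sigma> B)) (A.xiY A B)" for A B
  proof -
    have hL: "Comp M (B.xiY A B) (\<sigma> (A + B)) \<in> hom M (fst Y (A + B)) (P (fst Y2 A) (fst Y2 B))"
      using comp_hom[OF sh B.xiY(1)] .
    have hR: "Comp M (mtens M P p1 p2 (\<sigma> A) (\<sigma> B)) (A.xiY A B) \<in> hom M (fst Y (A + B)) (P (fst Y2 A) (fst Y2 B))"
      using comp_hom[OF A.xiY(1) mtens(1)[OF sh sh]] .
    have e1: "Comp M (p1 (fst Y2 A) (fst Y2 B)) (Comp M (B.xiY A B) (\<sigma> (A + B))) =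
       Comp M (p1 (fst Y2 A) (fst Y2 B)) (Comp M (mtens M P p1 p2 (\<sigma> A) (\<sigma> B)) (A.xiY A B))"
      using p_k(1)[OF sh B.xiY(1) B.Yo B.Yo] B.xiY(2) sn[OF gc1_arr[of A B]]
        tens_p1_k[OF A.xiY(1) sh sh] A.xiY(2) by simp
    have e2: "Comp M (p2 (fst Y2 A) (fst Y2 B)) (Comp M (B.xiY A B) (\<sigma> (A + B))) =
       Comp M (p2 (fst Y2 A) (fst Y2 B)) (Comp M (mtens M P p1 p2 (\<sigma> A) (\<sigma> B)) (A.xiY A B))"
      using p_k(2)[OF sh B.xiY(1) B.Yo B.Yo] B.xiY(3) sn[OF gc2_arr[of A B]]
        tens_p2_k[OF A.xiY(1) sh sh] A.xiY(3) by simp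
    show ?thesis using prod_ext[OF B.Yo B.Yo hL hR e1 e2] .
  qed
  have un: "Comp M B.xi0Y (\<sigma> 0) = A.xi0Y"
    using term_unique[OF comp_hom[OF sh B.xi0Y] A.xi0Y] .
  show ?thesis unfolding monoidal_trans_def Gof_def prod.case using nP mono un by simp
qed

end

theorem main_iso:
  fixes M :: "('o,'m) cat" and one :: 'o and P :: "'o \<Rightarrow> 'o \<Rightarrow> 'o"
    and p1 p2 :: "'o \<Rightarrow> 'o \<Rightarrow> 'm"
  assumes "category M"
    and "has_chosen_products M one P p1 p2"
  shows "iso_cat (scolax_cat M one P p1 p2) (funcat Gamma_op M)"
proof -
  interpret cprod M one P p1 p2 using assms by unfold_locales
  let ?S = "scolax_cat M one P p1 p2" and ?F = "funcat Gamma_op M"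
  define FF where "FF = (Yof M p1, \<lambda>(W, V, \<sigma>::nat \<Rightarrow> 'm). (Yof M p1 W, Yof M p1 V, \<sigma>))"
  define GG where "GG = (Gof M one P p1 p2, \<lambda>(Y, Y2, \<sigma>::nat \<Rightarrow> 'm). (Gof M one P p1 p2 Y, Gof M one P p1 p2 Y2, \<sigma>))"
  have objF: "Yof M p1 W \<in> Obj ?F" if "W \<in> Obj ?S" for W
  proof -
    obtain X \<xi> \<xi>0 where w: "W = (X, \<xi>, \<xi>0)" by (cases W)
    have sw: "scolax_obj M one P p1 p2 (X, \<xi>, \<xi>0)" using that w by (simp add: scolax_cat_def)
    interpret colax M one P p1 p2 X \<xi> \<xi>0 using mk_colax[OF sw] .
    show ?thesis using Y_functor Y_ext w by (simp add: funcat_def)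
  qed
  have objG: "Gof M one P p1 p2 Y \<in> Obj ?S" if "Y \<in> Obj ?F" for Y
  proof -
    have fy: "is_functor Gamma_op M Y" "ext_functor Gamma_op Y" using that by (simp_all add: funcat_def)
    interpret gfun M one P p1 p2 Y using mk_gfun[OF fy] .
    show ?thesis using G_scolax by (simp add: scolax_cat_def)
  qed
  have rtS: "Gof M one P p1 p2 (Yof M p1 W) = W" if "W \<in> Obj ?S" for W
  proof -
    obtain X \<xi> \<xi>0 where w: "W = (X, \<xi>, \<xi>0)" by (cases W)
    have sw: "scolax_obj M one P p1 p2 (X, \<xi>, \<xi>0)" using that w by (simp add: scolax_cat_def)
    interpret colax M one P p1 p2 X \<xi> \<xi>0 using mk_colax[OF sw] .
    show ?thesis using rt_colax w by simp
  qed
  have rtF: "Yof M p1 (Gof M one P p1 p2 Y) = Y" if "Y \<in> Obj ?F" for Y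
  proof -
    have fy: "is_functor Gamma_op M Y" "ext_functor Gamma_op Y" using that by (simp_all add: funcat_def)
    interpret gfun M one P p1 p2 Y using mk_gfun[OF fy] .
    show ?thesis using rt_Y .
  qed
  have arrF: "(Yof M p1 W, Yof M p1 V, \<sigma>) \<in> Arr ?F" if "(W, V, \<sigma>) \<in> Arr ?S" for W V \<sigma>
  proof -
    obtain X \<xi> \<xi>0 where w: "W = (X, \<xi>, \<xi>0)" by (cases W)
    obtain X2 \<xi>2 \<xi>02 where v: "V = (X2, \<xi>2, \<xi>02)" by (cases V)
    have sw: "scolax_obj M one P p1 p2 (X, \<xi>, \<xi>0)" "scolax_obj M one P p1 p2 (X2, \<xi>2, \<xi>02)"
      "monoidal_trans M P p1 p2 (X, \<xi>, \<xi>0) (X2, \<xi>2, \<xi>02) \<sigma>"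
      using that w v by (simp_all add: scolax_cat_def)
    have o: "W \<in> Obj ?S" "V \<in> Obj ?S" using sw w v by (simp_all add: scolax_cat_def)
    have "Yof M p1 W \<in> Obj ?F" "Yof M p1 V \<in> Obj ?F" using objF o by auto
    moreover have "nat_trans Gamma_op M (Yof M p1 W) (Yof M p1 V) \<sigma>" using F_nat[OF sw] w v by simp
    ultimately show ?thesis by (simp add: funcat_def)
  qed
  have arrG: "(Gof M one P p1 p2 Y, Gof M one P p1 p2 Y2, \<sigma>) \<in> Arr ?S" if "(Y, Y2, \<sigma>) \<in> Arr ?F" for Y Y2 \<sigma>
  proof -
    have fy: "is_functor Gamma_op M Y" "ext_functor Gamma_op Y" "is_functor Gamma_op M Y2" "ext_functor Gamma_op Y2"
      "nat_trans Gamma_op M Y Y2 \<sigma>" using that by (simp_all add: funcat_def)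
    have o: "Y \<in> Obj ?F" "Y2 \<in> Obj ?F" using fy by (simp_all add: funcat_def)
    have "Gof M one P p1 p2 Y \<in> Obj ?S" "Gof M one P p1 p2 Y2 \<in> Obj ?S" using objG o by auto
    moreover have "monoidal_trans M P p1 p2 (Gof M one P p1 p2 Y) (Gof M one P p1 p2 Y2) \<sigma>" using G_mono[OF fy] .
    ultimately show ?thesis by (simp add: scolax_cat_def)
  qed
  have F: "is_functor ?S ?F FF"
    unfolding is_functor_def
  proof (intro conjI ballI impI)
    fix a assume "a \<in> Obj ?S" then show "fst FF a \<in> Obj ?F" using objF FF_def by simp
  next
    fix f assume f: "f \<in> Arr ?S"
    obtain W V \<sigma> where ff: "f = (W, V, \<sigma>)" by (cases f)
    show "snd FF f \<in> hom ?F (fst FF (Dom ?S f)) (fst FF (Cod ?S f))"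
    proof -
      have a: "(Yof M p1 W, Yof M p1 V, \<sigma>) \<in> Arr ?F" using arrF f ff by simp
      show ?thesis unfolding FF_def hom_def ff using a by (simp add: scolax_simps funcat_simps)
    qed
  next
    fix a assume "a \<in> Obj ?S"
    show "snd FF (Ide ?S a) = Ide ?F (fst FF a)"
      unfolding FF_def by (simp add: scolax_simps funcat_simps Yof_fst)
  next
    fix f g assume fg: "f \<in> Arr ?S" "g \<in> Arr ?S" "Cod ?S f = Dom ?S g"
    obtain W V \<sigma> where ff: "f = (W, V, \<sigma>)" by (cases f)
    obtain V' U \<tau> where gg: "g = (V', U, \<tau>)" by (cases g)
    show "snd FF (Comp ?S g f) = Comp ?F (snd FF g) (snd FF f)"
      unfolding FF_def ff gg by (simp add: scolax_simps funcat_simps)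
  qed
  have G: "is_functor ?F ?S GG"
    unfolding is_functor_def
  proof (intro conjI ballI impI)
    fix a assume "a \<in> Obj ?F" then show "fst GG a \<in> Obj ?S" using objG GG_def by simp
  next
    fix f assume f: "f \<in> Arr ?F"
    obtain Y Y2 \<sigma> where ff: "f = (Y, Y2, \<sigma>)" by (cases f)
    show "snd GG f \<in> hom ?S (fst GG (Dom ?F f)) (fst GG (Cod ?F f))"
    proof -
      have a: "(Gof M one P p1 p2 Y, Gof M one P p1 p2 Y2, \<sigma>) \<in> Arr ?S" using arrG f ff by simp
      show ?thesis unfolding GG_def hom_def ff using a by (simp add: scolax_simps funcat_simps)
    qed
  next
    fix a assume "a \<in> Obj ?F"
    show "snd GG (Ide ?F a) = Ide ?S (fst GG a)"
      unfolding GG_def by (simp add: scolax_simps funcat_simps Gof_fst)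
  next
    fix f g assume fg: "f \<in> Arr ?F" "g \<in> Arr ?F" "Cod ?F f = Dom ?F g"
    obtain W V \<sigma> where ff: "f = (W, V, \<sigma>)" by (cases f)
    obtain V' U \<tau> where gg: "g = (V', U, \<tau>)" by (cases g)
    show "snd GG (Comp ?F g f) = Comp ?S (snd GG g) (snd GG f)"
      unfolding GG_def ff gg by (simp add: scolax_simps funcat_simps)
  qed
  have r1: "\<forall>a\<in>Obj ?S. fst GG (fst FF a) = a" using rtS FF_def GG_def by simp
  have r2: "\<forall>f\<in>Arr ?S. snd GG (snd FF f) = f"
  proof
    fix f assume f: "f \<in> Arr ?S"
    obtain W V \<sigma> where ff: "f = (W, V, \<sigma>)" by (cases f)
    have "W \<in> Obj ?S" "V \<in> Obj ?S" using f ff by (simp_all add: scolax_cat_def)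
    then show "snd GG (snd FF f) = f" using rtS ff FF_def GG_def by simp
  qed
  have r3: "\<forall>b\<in>Obj ?F. fst FF (fst GG b) = b" using rtF FF_def GG_def by simp
  have r4: "\<forall>g\<in>Arr ?F. snd FF (snd GG g) = g"
  proof
    fix f assume f: "f \<in> Arr ?F"
    obtain Y Y2 \<sigma> where ff: "f = (Y, Y2, \<sigma>)" by (cases f)
    have "Y \<in> Obj ?F" "Y2 \<in> Obj ?F" using f ff by (simp_all add: funcat_def)
    then show "snd FF (snd GG f) = f" using rtF ff FF_def GG_def by simp
  qed
  show ?thesis unfolding iso_cat_def using F G r1 r2 r3 r4 by blast
qed


theorem proposition3p1p1:
  fixes M :: "('o,'m) cat" and one :: 'o and P :: "'o \<Rightarrow> 'o \<Rightarrow> 'o"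
    and p1 p2 :: "'o \<Rightarrow> 'o \<Rightarrow> 'm"
  assumes "category M"
    and "has_chosen_products M one P p1 p2"
  shows "iso_cat (scolax_cat M one P p1 p2) (funcat Gamma_op M)"
  using main_iso[OF assms] .

end
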